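(* Let $G$ be a complex, simply-connected, simple Lie group with Borel subgroup $B$, maximal torus $\mathbb{T}\subset B$, simple roots $\Delta$, Weyl group $W$ with longest element $w_0$, and let $P\supsetneq B$ be a proper parabolic subgroup with $\Delta_P\subsetneq\Delta$ and $w_P$ the longest element of $W_P$. Let $u\in W$. Then: (1) $\mathrm{id}\lessdot u\le_P w_0w_P$ if and only if $u=s_\alpha$ for some $\alpha\in\Delta$. (2) $\mathrm{id}\le_P u\lessdot w_0w_P$ if and only if $u=\pi_P(w_0s_\alpha)=w_0s_\alpha w_P$ for some $\alpha\in\Delta\setminus\Delta_P$.
   Context: $W_P$ is the subgroup of $W$ generated by the simple reflections $s_\alpha$, $\alpha\in\Delta_P$; $W^P$ is the set of minimal length coset representatives of $W/W_P$, and $\pi_P\colon W\to W^P$ sends $w$ to the element of $W^P$ in $wW_P$. $\ell$ is the length function. The Bruhat order $\le$ is the transitive closure of the covers $u\lessdot v$, meaning $\ell(v)=\ell(u)+1$ and $v=us_\gamma$ for some root $\gamma$ (with $s_\gamma$ its reflection). The $P$-Bruhat order $\le_P$ is the partial order on $W$ generated (by transitive closure) by the covers $u\lessdot_P v$, meaning $u\lessdot v$ and $\pi_P(u)<\pi_P(v)$ in Bruhat order. *)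

theory Defs
  imports "HOL-Analysis.Analysis"
begin

text \<open>The Weyl group of a complex simply-connected simple Lie group is the Weyl group
  of an irreducible reduced crystallographic root system; simple roots are a base.\<close>

definition rrefl :: "'a::euclidean_space \<Rightarrow> 'a \<Rightarrow> 'a" where
  "rrefl \<alpha> v = v - (2 * (v \<bullet> \<alpha>) / (\<alpha> \<bullet> \<alpha>)) *\<^sub>R \<alpha>"

definition root_system :: "'a::euclidean_space set \<Rightarrow> bool" where
  "root_system R \<longleftrightarrow> finite R \<and> 0 \<notin> R \<and> span R = UNIV
     \<and> (\<forall>\<alpha>\<in>R. \<forall>\<beta>\<in>R. rrefl \<alpha> \<beta> \<in> R)
     \<and> (\<forall>\<alpha>\<in>R. \<forall>\<beta>\<in>R. 2 * (\<beta> \<bullet> \<alpha>) / (\<alpha> \<bullet> \<alpha>) \<in> \<int>)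
     \<and> (\<forall>\<alpha>\<in>R. \<forall>c::real. c *\<^sub>R \<alpha> \<in> R \<longrightarrow> c = 1 \<or> c = -1)"

definition irreducible_rs :: "'a::euclidean_space set \<Rightarrow> bool" where
  "irreducible_rs R \<longleftrightarrow> \<not> (\<exists>R1 R2. R1 \<noteq> {} \<and> R2 \<noteq> {} \<and> R1 \<union> R2 = R \<and> R1 \<inter> R2 = {}
        \<and> (\<forall>a\<in>R1. \<forall>b\<in>R2. a \<bullet> b = 0))"

definition is_base :: "'a::euclidean_space set \<Rightarrow> 'a set \<Rightarrow> bool" where
  "is_base R \<Delta> \<longleftrightarrow> \<Delta> \<subseteq> R \<and> independent \<Delta>
     \<and> (\<forall>\<beta>\<in>R. \<exists>c::'a \<Rightarrow> int. \<beta> = (\<Sum>\<alpha>\<in>\<Delta>. of_int (c \<alpha>) *\<^sub>R \<alpha>)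
            \<and> ((\<forall>\<alpha>\<in>\<Delta>. c \<alpha> \<ge> 0) \<or> (\<forall>\<alpha>\<in>\<Delta>. c \<alpha> \<le> 0)))"

definition word :: "'a::euclidean_space list \<Rightarrow> 'a \<Rightarrow> 'a" where
  "word ws = foldr (\<lambda>\<alpha> f. rrefl \<alpha> \<circ> f) ws id"

text \<open>Group generated by the reflections s_alpha, alpha in S (a finite group of involutions,
  so the generated monoid is the generated group).\<close>
definition gen_group :: "'a::euclidean_space set \<Rightarrow> ('a \<Rightarrow> 'a) set" where
  "gen_group S = {word ws | ws. set ws \<subseteq> S}"

abbreviation weyl_group :: "'a::euclidean_space set \<Rightarrow> ('a \<Rightarrow> 'a) set" where
  "weyl_group R \<equiv> gen_group R"

definition len :: "'a::euclidean_space set \<Rightarrow> ('a \<Rightarrow> 'a) \<Rightarrow> nat" where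
  "len \<Delta> w = (LEAST n. \<exists>ws. set ws \<subseteq> \<Delta> \<and> length ws = n \<and> word ws = w)"

definition bruhat_cover :: "'a::euclidean_space set \<Rightarrow> 'a set \<Rightarrow> ('a \<Rightarrow> 'a) \<Rightarrow> ('a \<Rightarrow> 'a) \<Rightarrow> bool" where
  "bruhat_cover R \<Delta> u v \<longleftrightarrow> u \<in> weyl_group R \<and> v \<in> weyl_group R
     \<and> len \<Delta> v = len \<Delta> u + 1 \<and> (\<exists>\<gamma>\<in>R. v = u \<circ> rrefl \<gamma>)"

definition bruhat_le :: "'a::euclidean_space set \<Rightarrow> 'a set \<Rightarrow> ('a \<Rightarrow> 'a) \<Rightarrow> ('a \<Rightarrow> 'a) \<Rightarrow> bool" where
  "bruhat_le R \<Delta> = (bruhat_cover R \<Delta>)\<^sup>*\<^sup>*"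

definition bruhat_lt :: "'a::euclidean_space set \<Rightarrow> 'a set \<Rightarrow> ('a \<Rightarrow> 'a) \<Rightarrow> ('a \<Rightarrow> 'a) \<Rightarrow> bool" where
  "bruhat_lt R \<Delta> u v \<longleftrightarrow> bruhat_le R \<Delta> u v \<and> u \<noteq> v"

definition min_coset_reps :: "'a::euclidean_space set \<Rightarrow> 'a set \<Rightarrow> 'a set \<Rightarrow> ('a \<Rightarrow> 'a) set" where
  "min_coset_reps R \<Delta> \<Delta>P = {w \<in> weyl_group R. \<forall>x\<in>gen_group \<Delta>P. len \<Delta> w \<le> len \<Delta> (w \<circ> x)}"

definition projP :: "'a::euclidean_space set \<Rightarrow> 'a set \<Rightarrow> 'a set \<Rightarrow> ('a \<Rightarrow> 'a) \<Rightarrow> ('a \<Rightarrow> 'a)" where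
  "projP R \<Delta> \<Delta>P w = (THE v. v \<in> min_coset_reps R \<Delta> \<Delta>P \<and> (\<exists>x\<in>gen_group \<Delta>P. v = w \<circ> x))"

definition P_cover :: "'a::euclidean_space set \<Rightarrow> 'a set \<Rightarrow> 'a set \<Rightarrow> ('a \<Rightarrow> 'a) \<Rightarrow> ('a \<Rightarrow> 'a) \<Rightarrow> bool" where
  "P_cover R \<Delta> \<Delta>P u v \<longleftrightarrow> bruhat_cover R \<Delta> u v
     \<and> bruhat_lt R \<Delta> (projP R \<Delta> \<Delta>P u) (projP R \<Delta> \<Delta>P v)"

definition P_le :: "'a::euclidean_space set \<Rightarrow> 'a set \<Rightarrow> 'a set \<Rightarrow> ('a \<Rightarrow> 'a) \<Rightarrow> ('a \<Rightarrow> 'a) \<Rightarrow> bool" where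
  "P_le R \<Delta> \<Delta>P = (P_cover R \<Delta> \<Delta>P)\<^sup>*\<^sup>*"

definition longest :: "'a::euclidean_space set \<Rightarrow> ('a \<Rightarrow> 'a) set \<Rightarrow> ('a \<Rightarrow> 'a)" where
  "longest \<Delta> A = (THE w. w \<in> A \<and> (\<forall>v\<in>A. len \<Delta> v \<le> len \<Delta> w))"

end

theory Submission
  imports Defs
begin

lemma rrefl_zero: "rrefl 0 = id"
  by (auto simp: rrefl_def fun_eq_iff)

lemma linear_rrefl: "linear (rrefl a)"
proof (rule linearI)
  fix x y show "rrefl a (x + y) = rrefl a x + rrefl a y"
    unfolding rrefl_def by (simp add: inner_add_left add_divide_distrib distrib_left scaleR_add_left)
next
  fix c x show "rrefl a (c *\<^sub>R x) = c *\<^sub>R rrefl a x"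
    unfolding rrefl_def by (simp add: scaleR_diff_right)
qed

lemma rrefl_add: "rrefl a (x + y) = rrefl a x + rrefl a y"
  using linear_rrefl[of a] by (simp add: linear_add)

lemma rrefl_scale: "rrefl a (c *\<^sub>R x) = c *\<^sub>R rrefl a x"
  using linear_rrefl[of a] by (simp add: linear_scale)

lemma rrefl_minus: "rrefl a (- x) = - rrefl a x"
  using linear_rrefl[of a] by (simp add: linear_neg)

lemma rrefl_diff: "rrefl a (x - y) = rrefl a x - rrefl a y"
  using linear_rrefl[of a] by (simp add: linear_diff)

lemma rrefl_sum: "rrefl a (\<Sum>i\<in>I. f i) = (\<Sum>i\<in>I. rrefl a (f i))"
  using linear_rrefl[of a] by (simp add: linear_sum)

lemma rrefl_inner: "rrefl a x \<bullet> rrefl a y = x \<bullet> y"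
proof (cases "a = 0")
  case True then show ?thesis by (simp add: rrefl_def)
next
  case False
  then have "a \<bullet> a \<noteq> 0" by simp
  then show ?thesis unfolding rrefl_def
    by (simp add: inner_diff_left inner_diff_right inner_commute field_simps)
qed

lemma rrefl_rrefl [simp]: "rrefl a (rrefl a x) = x"
proof (cases "a = 0")
  case True then show ?thesis by (simp add: rrefl_zero)
next
  case False
  then have "a \<bullet> a \<noteq> 0" by simp
  then show ?thesis unfolding rrefl_def
    by (simp add: inner_diff_left algebra_simps)
qed

lemma rrefl_comp_rrefl [simp]: "rrefl a \<circ> rrefl a = id"
  by (auto simp: fun_eq_iff)

lemma rrefl_self: "rrefl a a = - a"
proof (cases "a = 0")
  case True then show ?thesis by (simp add: rrefl_zero)
next
  case False
  then have "a \<bullet> a \<noteq> 0" by simp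
  then show ?thesis unfolding rrefl_def by (simp add: scaleR_2)
qed

lemma rrefl_orth: "x \<bullet> a = 0 \<Longrightarrow> rrefl a x = x"
  by (simp add: rrefl_def)

lemma rrefl_neg: "rrefl (- a) = rrefl a"
  by (auto simp: rrefl_def fun_eq_iff)

lemma rrefl_eq: "rrefl a x = x - (2 * (x \<bullet> a) / (a \<bullet> a)) *\<^sub>R a"
  by (simp add: rrefl_def)

definition isom :: "('a::euclidean_space \<Rightarrow> 'a) \<Rightarrow> bool" where
  "isom f \<longleftrightarrow> linear f \<and> (\<forall>x y. f x \<bullet> f y = x \<bullet> y)"

lemma isom_rrefl: "isom (rrefl a)"
  by (simp add: isom_def linear_rrefl rrefl_inner)

lemma isom_id: "isom id"
  by (simp add: isom_def linear_id)

lemma isom_comp: "isom f \<Longrightarrow> isom g \<Longrightarrow> isom (f \<circ> g)"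
  by (simp add: isom_def linear_compose)

lemma isom_conj:
  assumes "isom f"
  shows "f (rrefl a x) = rrefl (f a) (f x)"
proof -
  have l: "linear f" and i: "\<And>x y. f x \<bullet> f y = x \<bullet> y" using assms by (auto simp: isom_def)
  show ?thesis unfolding rrefl_def
    by (simp add: linear_diff[OF l] linear_scale[OF l] i)
qed

lemma isom_conj_comp:
  assumes "isom f"
  shows "f \<circ> rrefl a = rrefl (f a) \<circ> f"
  using isom_conj[OF assms] by (auto simp: fun_eq_iff)

lemma word_Nil [simp]: "word [] = id"
  by (simp add: word_def)

lemma word_Cons [simp]: "word (a # ws) = rrefl a \<circ> word ws"
  by (simp add: word_def)

lemma word_append: "word (ws @ vs) = word ws \<circ> word vs"
  by (induction ws) (auto simp: comp_assoc)

lemma word_snoc: "word (ws @ [a]) = word ws \<circ> rrefl a"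
  by (simp add: word_append)

lemma word_rev_comp: "word (rev ws) \<circ> word ws = id"
proof (induction ws)
  case Nil then show ?case by simp
next
  case (Cons a ws)
  have "word (rev (a # ws)) \<circ> word (a # ws) = word (rev ws) \<circ> (rrefl a \<circ> rrefl a) \<circ> word ws"
    by (simp add: word_append comp_assoc del: rrefl_comp_rrefl)
  also have "\<dots> = id" using Cons by (simp add: fun_eq_iff)
  finally show ?case .
qed

lemma word_comp_rev: "word ws \<circ> word (rev ws) = id"
  using word_rev_comp[of "rev ws"] by simp

lemma word_rev_app [simp]: "word (rev ws) (word ws x) = x"
  using word_rev_comp[of ws] by (auto simp: fun_eq_iff)

lemma word_app_rev [simp]: "word ws (word (rev ws) x) = x"
  using word_comp_rev[of ws] by (auto simp: fun_eq_iff)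

lemma isom_word: "isom (word ws)"
proof (induction ws)
  case Nil then show ?case using isom_id by (simp add: id_def)
next
  case (Cons a ws) then show ?case using isom_comp[OF isom_rrefl[of a] Cons.IH] word_Cons by metis
qed

lemma linear_word: "linear (word ws)"
  using isom_word by (auto simp: isom_def)

lemma word_inner: "word ws x \<bullet> word ws y = x \<bullet> y"
  using isom_word by (auto simp: isom_def)

lemma word_fix: "(\<And>b. b \<in> set ws \<Longrightarrow> x \<bullet> b = 0) \<Longrightarrow> word ws x = x"
  by (induction ws) (auto simp: rrefl_orth)

lemma gen_group_id [simp]: "id \<in> gen_group S"
  unfolding gen_group_def by (auto intro!: exI[of _ "[]"])

lemma gen_group_refl: "a \<in> S \<Longrightarrow> rrefl a \<in> gen_group S"
  unfolding gen_group_def by (auto intro!: exI[of _ "[a]"])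

lemma gen_group_comp: "f \<in> gen_group S \<Longrightarrow> g \<in> gen_group S \<Longrightarrow> f \<circ> g \<in> gen_group S"
proof -
  assume "f \<in> gen_group S" "g \<in> gen_group S"
  then obtain ws vs where "set ws \<subseteq> S" "f = word ws" "set vs \<subseteq> S" "g = word vs"
    unfolding gen_group_def by auto
  then show ?thesis unfolding gen_group_def by (auto intro!: exI[of _ "ws @ vs"] simp: word_append)
qed

lemma gen_group_mono: "S \<subseteq> T \<Longrightarrow> gen_group S \<subseteq> gen_group T"
  unfolding gen_group_def by auto

lemma gen_groupE:
  assumes "f \<in> gen_group S"
  obtains ws where "set ws \<subseteq> S" "f = word ws"
  using assms unfolding gen_group_def by auto

lemma gen_group_inv:
  assumes "f \<in> gen_group S"
  obtains g where "g \<in> gen_group S" "g \<circ> f = id" "f \<circ> g = id"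
proof -
  obtain ws where ws: "set ws \<subseteq> S" "f = word ws" using assms by (rule gen_groupE)
  show ?thesis
    by (rule that[of "word (rev ws)"]) (use ws in \<open>auto simp: gen_group_def word_rev_comp word_comp_rev intro!: exI[of _ "rev ws"]\<close>)
qed

lemma isom_gen: "f \<in> gen_group S \<Longrightarrow> isom f"
  by (auto elim!: gen_groupE simp: isom_word)

lemma linear_gen: "f \<in> gen_group S \<Longrightarrow> linear f"
  using isom_gen isom_def by blast

lemma gen_fix: "f \<in> gen_group S \<Longrightarrow> (\<And>b. b \<in> S \<Longrightarrow> x \<bullet> b = 0) \<Longrightarrow> f x = x"
  by (auto elim!: gen_groupE intro!: word_fix)

lemma gen_group_cases:
  assumes "f \<in> gen_group S"
  shows "f = id \<or> (\<exists>g a. g \<in> gen_group S \<and> a \<in> S \<and> f = g \<circ> rrefl a)"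
proof -
  obtain ws where ws: "set ws \<subseteq> S" "f = word ws" using assms by (rule gen_groupE)
  show ?thesis
  proof (cases ws rule: rev_cases)
    case Nil then show ?thesis using ws by simp
  next
    case (snoc vs a)
    then show ?thesis using ws by (auto simp: word_snoc gen_group_def)
  qed
qed


locale RS =
  fixes R D :: "'a::euclidean_space set"
  assumes rs: "root_system R" and base: "is_base R D"
begin

lemma finR: "finite R" and zeroR: "0 \<notin> R" and spanR: "span R = UNIV"
  and reflR: "\<alpha> \<in> R \<Longrightarrow> \<beta> \<in> R \<Longrightarrow> rrefl \<alpha> \<beta> \<in> R"
  and reducedR: "\<alpha> \<in> R \<Longrightarrow> c *\<^sub>R \<alpha> \<in> R \<Longrightarrow> c = 1 \<or> c = -1"
  using rs unfolding root_system_def by auto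

lemma DR: "D \<subseteq> R" and indepD: "independent D"
  and expD: "\<beta> \<in> R \<Longrightarrow> \<exists>c::'a \<Rightarrow> int. \<beta> = (\<Sum>\<alpha>\<in>D. of_int (c \<alpha>) *\<^sub>R \<alpha>)
            \<and> ((\<forall>\<alpha>\<in>D. c \<alpha> \<ge> 0) \<or> (\<forall>\<alpha>\<in>D. c \<alpha> \<le> 0))"
  using base unfolding is_base_def by auto

lemma finD: "finite D"
  using indepD finiteI_independent by blast

lemma spanD: "span D = UNIV"
proof -
  have "R \<subseteq> span D"
  proof
    fix b assume "b \<in> R"
    then obtain c :: "'a \<Rightarrow> int" where "b = (\<Sum>\<alpha>\<in>D. of_int (c \<alpha>) *\<^sub>R \<alpha>)" using expD by blast
    then show "b \<in> span D" by (simp add: span_sum span_scale span_base)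
  qed
  then have "span R \<subseteq> span D" by (simp add: span_minimal)
  then show ?thesis using spanR by auto
qed

definition cf :: "'a \<Rightarrow> 'a \<Rightarrow> real" where
  "cf x = (SOME c. x = (\<Sum>a\<in>D. c a *\<^sub>R a))"

lemma cf_repr: "x = (\<Sum>a\<in>D. cf x a *\<^sub>R a)"
proof -
  have "x \<in> span D" using spanD by auto
  then have "\<exists>c. x = (\<Sum>a\<in>D. c a *\<^sub>R a)" using span_finite[OF finD] by auto
  then show ?thesis unfolding cf_def by (rule someI_ex)
qed

lemma cf_unique:
  assumes "x = (\<Sum>a\<in>D. c a *\<^sub>R a)" "a \<in> D"
  shows "cf x a = c a"
proof (rule ccontr)
  assume ne: "cf x a \<noteq> c a"
  have "(\<Sum>a\<in>D. (cf x a - c a) *\<^sub>R a) = (\<Sum>a\<in>D. cf x a *\<^sub>R a) - (\<Sum>a\<in>D. c a *\<^sub>R a)"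
    by (simp add: scaleR_diff_left sum_subtractf)
  also have "\<dots> = 0" using cf_repr[of x] assms(1) by simp
  finally have "(\<Sum>a\<in>D. (cf x a - c a) *\<^sub>R a) = 0" .
  then have "dependent D" using dependent_finite[OF finD] ne assms(2)
    by (intro iffD2[OF dependent_finite[OF finD]]) (auto intro!: exI[of _ "\<lambda>a. cf x a - c a"])
  then show False using indepD by simp
qed

lemma cf_add: "a \<in> D \<Longrightarrow> cf (x + y) a = cf x a + cf y a"
  by (rule cf_unique) (subst cf_repr[of x], subst cf_repr[of y], simp add: scaleR_add_left sum.distrib)

lemma cf_scale: "a \<in> D \<Longrightarrow> cf (c *\<^sub>R x) a = c * cf x a"
  by (rule cf_unique) (subst cf_repr[of x], simp add: scaleR_sum_right)

lemma cf_minus: "a \<in> D \<Longrightarrow> cf (- x) a = - cf x a"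
  using cf_scale[of a "-1" x] by simp

lemma cf_diff: "a \<in> D \<Longrightarrow> cf (x - y) a = cf x a - cf y a"
  using cf_add[of a x "-y"] cf_minus[of a y] by simp

lemma cf_zero: "a \<in> D \<Longrightarrow> cf 0 a = 0"
  using cf_scale[of a 0 0] by simp

lemma cf_sum: "a \<in> D \<Longrightarrow> cf (\<Sum>i\<in>I. f i) a = (\<Sum>i\<in>I. cf (f i) a)"
  by (induction I rule: infinite_finite_induct) (auto simp: cf_zero cf_add)

lemma cf_simple: "a \<in> D \<Longrightarrow> b \<in> D \<Longrightarrow> cf b a = (if a = b then 1 else 0)"
proof -
  assume a: "a \<in> D" and b: "b \<in> D"
  have "b = (\<Sum>x\<in>D. (if x = b then 1 else 0) *\<^sub>R x)"
    using b finD by (simp add: if_distrib[of "\<lambda>r. r *\<^sub>R _"] sum.delta' cong: if_cong)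
  from cf_unique[OF this a] show ?thesis by auto
qed

lemma cf_all_zero: "(\<And>a. a \<in> D \<Longrightarrow> cf x a = 0) \<Longrightarrow> x = 0"
  by (subst cf_repr) simp

lemma cf_lin: "linear f \<Longrightarrow> a' \<in> D \<Longrightarrow> cf (f b) a' = (\<Sum>a\<in>D. cf b a * cf (f a) a')"
proof -
  assume l: "linear f" and a': "a' \<in> D"
  have "f b = f (\<Sum>a\<in>D. cf b a *\<^sub>R a)" using cf_repr[of b] by (rule arg_cong)
  also have "\<dots> = (\<Sum>a\<in>D. cf b a *\<^sub>R f a)"
    by (simp only: linear_sum[OF l] linear_scale[OF l])
  finally have fb: "f b = (\<Sum>a\<in>D. cf b a *\<^sub>R f a)" .
  have "cf (f b) a' = (\<Sum>a\<in>D. cf (cf b a *\<^sub>R f a) a')"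
    unfolding fb by (rule cf_sum[OF a'])
  also have "\<dots> = (\<Sum>a\<in>D. cf b a * cf (f a) a')"
    by (simp only: cf_scale[OF a'])
  finally show ?thesis .
qed

lemma cf_root_int: "b \<in> R \<Longrightarrow> a \<in> D \<Longrightarrow> cf b a \<in> \<int>"
proof -
  assume "b \<in> R" "a \<in> D"
  then obtain c :: "'a \<Rightarrow> int" where "b = (\<Sum>\<alpha>\<in>D. of_int (c \<alpha>) *\<^sub>R \<alpha>)" using expD by blast
  then have "cf b a = of_int (c a)" using \<open>a \<in> D\<close> by (rule cf_unique)
  then show ?thesis by simp
qed

lemma root_sign: "b \<in> R \<Longrightarrow> (\<forall>a\<in>D. cf b a \<ge> 0) \<or> (\<forall>a\<in>D. cf b a \<le> 0)"
proof -
  assume "b \<in> R"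
  then obtain c :: "'a \<Rightarrow> int" where c: "b = (\<Sum>\<alpha>\<in>D. of_int (c \<alpha>) *\<^sub>R \<alpha>)"
    "(\<forall>\<alpha>\<in>D. c \<alpha> \<ge> 0) \<or> (\<forall>\<alpha>\<in>D. c \<alpha> \<le> 0)" using expD by blast
  have "\<forall>a\<in>D. cf b a = of_int (c a)" using cf_unique[OF c(1)] by blast
  then show ?thesis using c(2) by auto
qed

lemma negR: "b \<in> R \<Longrightarrow> - b \<in> R"
  using reflR[of b b] by (simp add: rrefl_self)

lemma D_nz: "a \<in> D \<Longrightarrow> a \<noteq> 0"
  using DR zeroR by auto

definition Pos :: "'a set" where
  "Pos = {x \<in> R. \<forall>a\<in>D. 0 \<le> cf x a}"

lemma Pos_R: "x \<in> Pos \<Longrightarrow> x \<in> R"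
  by (simp add: Pos_def)

lemma fin_Pos: "finite Pos"
  using finR by (simp add: Pos_def)

lemma D_Pos: "a \<in> D \<Longrightarrow> a \<in> Pos"
  using DR by (auto simp: Pos_def cf_simple)

lemma root_nz_cf: "b \<in> R \<Longrightarrow> \<exists>a\<in>D. cf b a \<noteq> 0"
  using cf_all_zero zeroR by blast

lemma Pos_or_neg: "b \<in> R \<Longrightarrow> b \<in> Pos \<or> - b \<in> Pos"
  using root_sign[of b] negR[of b] by (auto simp: Pos_def cf_minus)

lemma not_Pos_and_neg: "b \<in> Pos \<Longrightarrow> - b \<notin> Pos"
proof
  assume b: "b \<in> Pos" and nb: "- b \<in> Pos"
  have "cf b a = 0" if a: "a \<in> D" for a
  proof -
    have "cf b a \<ge> 0" using b a unfolding Pos_def by blast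
    moreover have "cf (- b) a \<ge> 0" using nb a unfolding Pos_def by blast
    ultimately show ?thesis using cf_minus[OF a, of b] by linarith
  qed
  moreover obtain a where "a \<in> D" "cf b a \<noteq> 0" using root_nz_cf[of b] b Pos_R by blast
  ultimately show False by blast
qed

lemma neg_iff: "b \<in> R \<Longrightarrow> b \<notin> Pos \<longleftrightarrow> - b \<in> Pos"
  using Pos_or_neg not_Pos_and_neg by blast

lemma Pos_by_cf:
  assumes "b \<in> R" "a \<in> D" "cf b a > 0" shows "b \<in> Pos"
proof -
  have "\<not> (\<forall>a\<in>D. cf b a \<le> 0)" using assms by force
  then have "\<forall>a\<in>D. cf b a \<ge> 0" using root_sign[OF assms(1)] by blast
  then show ?thesis using assms(1) unfolding Pos_def by blast
qed

lemma neg_by_cf: "b \<in> R \<Longrightarrow> a \<in> D \<Longrightarrow> cf b a < 0 \<Longrightarrow> b \<notin> Pos"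
  unfolding Pos_def by force

lemma simple_perm:
  assumes a: "a \<in> D" and b: "b \<in> Pos" and ne: "b \<noteq> a"
  shows "rrefl a b \<in> Pos"
proof -
  have bR: "b \<in> R" using b Pos_R by blast
  have "\<exists>a'\<in>D. a' \<noteq> a \<and> cf b a' \<noteq> 0"
  proof (rule ccontr)
    assume "\<not> ?thesis"
    then have z: "\<forall>a'\<in>D. a' \<noteq> a \<longrightarrow> cf b a' = 0" by auto
    have "b = (\<Sum>x\<in>D. cf b x *\<^sub>R x)" by (rule cf_repr)
    also have "\<dots> = (\<Sum>x\<in>D. (if x = a then cf b a else 0) *\<^sub>R x)"
      by (rule sum.cong) (use z in auto)
    also have "\<dots> = cf b a *\<^sub>R a"
      using a finD by (simp add: if_distrib[of "\<lambda>r. r *\<^sub>R _"] sum.delta' cong: if_cong)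
    finally have "b = cf b a *\<^sub>R a" .
    then have "cf b a = 1 \<or> cf b a = -1" using reducedR[of a "cf b a"] bR a DR by auto
    moreover have "cf b a \<ge> 0" using b a by (auto simp: Pos_def)
    ultimately have "b = a" using \<open>b = cf b a *\<^sub>R a\<close> by auto
    then show False using ne by simp
  qed
  then obtain a' where a': "a' \<in> D" "a' \<noteq> a" "cf b a' \<noteq> 0" by blast
  have "cf b a' \<ge> 0" using b a'(1) unfolding Pos_def by blast
  then have pos: "cf b a' > 0" using a'(3) by linarith
  have "cf (rrefl a b) a' = cf b a'"
    using a a' by (simp only: rrefl_eq cf_diff cf_scale cf_simple) simp
  moreover have "rrefl a b \<in> R" using reflR a bR DR by auto
  ultimately show ?thesis using Pos_by_cf a' pos by auto
qed

lemma simple_pos_to_neg: "a \<in> D \<Longrightarrow> b \<in> Pos \<Longrightarrow> rrefl a b \<notin> Pos \<Longrightarrow> b = a"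
  using simple_perm by blast

lemma simple_self_neg: "a \<in> D \<Longrightarrow> rrefl a a \<notin> Pos"
  using D_Pos not_Pos_and_neg by (simp add: rrefl_self)

lemma simple_inner_nonpos:
  assumes "a \<in> D" "b \<in> D" "a \<noteq> b"
  shows "a \<bullet> b \<le> 0"
proof -
  have "rrefl a b \<in> Pos" using simple_perm assms D_Pos by auto
  then have "cf (rrefl a b) a \<ge> 0" using assms by (auto simp: Pos_def)
  moreover have "cf (rrefl a b) a = - (2 * (b \<bullet> a) / (a \<bullet> a))"
    using assms by (simp only: rrefl_eq cf_diff cf_scale cf_simple) simp
  ultimately have "- (2 * (b \<bullet> a) / (a \<bullet> a)) \<ge> 0" by simp
  moreover have "a \<bullet> a > 0" using D_nz assms by simp
  ultimately show ?thesis by (simp add: inner_commute divide_le_0_iff)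
qed

lemma word_R: "set ws \<subseteq> R \<Longrightarrow> b \<in> R \<Longrightarrow> word ws b \<in> R"
  by (induction ws) (auto intro: reflR)

lemma gen_R: "S \<subseteq> R \<Longrightarrow> w \<in> gen_group S \<Longrightarrow> b \<in> R \<Longrightarrow> w b \<in> R"
  by (auto elim!: gen_groupE intro!: word_R)

abbreviation WD where "WD \<equiv> gen_group D"

lemma WD_R: "w \<in> WD \<Longrightarrow> b \<in> R \<Longrightarrow> w b \<in> R"
  using gen_R DR by blast

end


context RS
begin

definition inv_set :: "('a \<Rightarrow> 'a) \<Rightarrow> 'a set" where
  "inv_set w = {b \<in> Pos. w b \<notin> Pos}"

definition ninv :: "('a \<Rightarrow> 'a) \<Rightarrow> nat" where
  "ninv w = card (inv_set w)"

definition good :: "('a \<Rightarrow> 'a) \<Rightarrow> bool" where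
  "good w \<longleftrightarrow> isom w \<and> (\<forall>b\<in>R. w b \<in> R)"

lemma good_WD: "w \<in> WD \<Longrightarrow> good w"
  using isom_gen WD_R good_def by blast

lemma good_gen_R: "w \<in> gen_group R \<Longrightarrow> good w"
  using isom_gen gen_R good_def by blast

lemma good_comp_rrefl: "good w \<Longrightarrow> a \<in> R \<Longrightarrow> good (w \<circ> rrefl a)"
  unfolding good_def using isom_comp[OF _ isom_rrefl] reflR by auto

lemma good_linear: "good w \<Longrightarrow> linear w"
  by (simp add: good_def isom_def)

lemma good_neg: "good w \<Longrightarrow> w (- x) = - w x"
  using good_linear linear_neg by blast

lemma inv_set_fin: "finite (inv_set w)"
  using fin_Pos by (simp add: inv_set_def)

lemma inv_set_sub: "inv_set w \<subseteq> Pos"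
  by (auto simp: inv_set_def)

lemma ninv_le: "ninv w \<le> card Pos"
  unfolding ninv_def using card_mono[OF fin_Pos inv_set_sub] .

lemma inv_set_step:
  assumes g: "good w" and a: "a \<in> D" and wa: "w a \<in> Pos"
  shows "inv_set (w \<circ> rrefl a) = insert a (rrefl a ` inv_set w)"
    and "a \<notin> rrefl a ` inv_set w"
proof -
  have aR: "a \<in> R" using a DR by auto
  show "a \<notin> rrefl a ` inv_set w"
  proof
    assume "a \<in> rrefl a ` inv_set w"
    then obtain c where c: "c \<in> inv_set w" "a = rrefl a c" by auto
    then have "c = rrefl a a" by (metis rrefl_rrefl)
    then have "c = - a" by (simp add: rrefl_self)
    then show False using c(1) D_Pos[OF a] not_Pos_and_neg by (auto simp: inv_set_def)
  qed
  show "inv_set (w \<circ> rrefl a) = insert a (rrefl a ` inv_set w)"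
  proof (intro set_eqI iffI)
    fix b assume b: "b \<in> inv_set (w \<circ> rrefl a)"
    then have bP: "b \<in> Pos" and nb: "w (rrefl a b) \<notin> Pos" by (auto simp: inv_set_def)
    show "b \<in> insert a (rrefl a ` inv_set w)"
    proof (cases "b = a")
      case True then show ?thesis by simp
    next
      case False
      then have cP: "rrefl a b \<in> Pos" using simple_perm a bP by blast
      then have "rrefl a b \<in> inv_set w" using nb by (simp add: inv_set_def)
      then have "rrefl a (rrefl a b) \<in> rrefl a ` inv_set w" by blast
      then show ?thesis by simp
    qed
  next
    fix b assume b: "b \<in> insert a (rrefl a ` inv_set w)"
    show "b \<in> inv_set (w \<circ> rrefl a)"
    proof (cases "b = a")
      case True
      have "w (rrefl a a) = - w a" by (simp add: rrefl_self good_neg[OF g])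
      then have "w (rrefl a a) \<notin> Pos" using not_Pos_and_neg wa by simp
      then show ?thesis using True D_Pos[OF a] by (simp add: inv_set_def)
    next
      case False
      then obtain c where c: "c \<in> inv_set w" "b = rrefl a c" using b by auto
      then have cP: "c \<in> Pos" and wc: "w c \<notin> Pos" by (auto simp: inv_set_def)
      have "c \<noteq> a" using wc wa by auto
      then have "b \<in> Pos" using simple_perm a cP c(2) by blast
      moreover have "w (rrefl a b) \<notin> Pos" using c(2) wc by simp
      ultimately show ?thesis by (simp add: inv_set_def)
    qed
  qed
qed

lemma ninv_step_pos:
  assumes g: "good w" and a: "a \<in> D" and wa: "w a \<in> Pos"
  shows "ninv (w \<circ> rrefl a) = ninv w + 1"
proof -
  have inj: "inj_on (rrefl a) (inv_set w)" by (metis inj_onI rrefl_rrefl)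
  have "ninv (w \<circ> rrefl a) = card (insert a (rrefl a ` inv_set w))"
    using inv_set_step(1)[OF assms] by (simp add: ninv_def)
  also have "\<dots> = card (rrefl a ` inv_set w) + 1"
    using inv_set_step(2)[OF assms] inv_set_fin by simp
  also have "\<dots> = ninv w + 1" using card_image[OF inj] by (simp add: ninv_def)
  finally show ?thesis .
qed

lemma ninv_step_neg:
  assumes g: "good w" and a: "a \<in> D" and wa: "w a \<notin> Pos"
  shows "ninv (w \<circ> rrefl a) + 1 = ninv w"
proof -
  have aR: "a \<in> R" using a DR by auto
  have g': "good (w \<circ> rrefl a)" using good_comp_rrefl[OF g aR] .
  have "w a \<in> R" using g aR by (simp add: good_def)
  then have "- w a \<in> Pos" using neg_iff wa by blast
  then have p: "(w \<circ> rrefl a) a \<in> Pos" by (simp add: rrefl_self good_neg[OF g])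
  have e: "(w \<circ> rrefl a) \<circ> rrefl a = w" by (rule ext) simp
  from ninv_step_pos[OF g' a p] show ?thesis unfolding e by (simp add: o_def)
qed

lemma deletion:
  assumes "set ws \<subseteq> D" "a \<in> D" "word ws a \<notin> Pos"
  shows "\<exists>vs. set vs \<subseteq> set ws \<and> length vs + 1 = length ws \<and> word ws \<circ> rrefl a = word vs"
  using assms
proof (induction ws)
  case Nil
  then show ?case using D_Pos by auto
next
  case (Cons b ws)
  have bD: "b \<in> D" using Cons.prems by auto
  show ?case
  proof (cases "word ws a \<in> Pos")
    case False
    have wsD: "set ws \<subseteq> D" "a \<in> D" using Cons.prems by auto
    obtain vs where vs: "set vs \<subseteq> set ws" "length vs + 1 = length ws" "word ws \<circ> rrefl a = word vs"
      using Cons.IH[OF wsD False] by blast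
    have "word (b # ws) \<circ> rrefl a = rrefl b \<circ> (word ws \<circ> rrefl a)"
      by (simp only: word_Cons comp_assoc)
    also have "\<dots> = word (b # vs)" by (simp only: vs(3) word_Cons)
    finally show ?thesis using vs(1,2) by (intro exI[of _ "b # vs"]) (auto simp: o_def)
  next
    case True
    have "rrefl b (word ws a) \<notin> Pos" using Cons.prems by simp
    then have eq: "word ws a = b" using simple_pos_to_neg[OF bD True] by simp
    have "word ws \<circ> rrefl a = rrefl (word ws a) \<circ> word ws"
      using isom_conj_comp[OF isom_word] .
    then have c: "word ws \<circ> rrefl a = rrefl b \<circ> word ws" by (simp only: eq)
    have "word (b # ws) \<circ> rrefl a = rrefl b \<circ> (word ws \<circ> rrefl a)"
      by (simp only: word_Cons comp_assoc)
    also have "\<dots> = rrefl b \<circ> (rrefl b \<circ> word ws)" by (simp only: c)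
    also have "\<dots> = word ws" by (rule ext) simp
    finally have fin: "word (b # ws) \<circ> rrefl a = word ws" .
    show ?thesis
    proof (intro exI conjI)
      show "set ws \<subseteq> set (b # ws)" by auto
      show "length ws + 1 = length (b # ws)" by simp
      show "word (b # ws) \<circ> rrefl a = word ws" by (rule fin)
    qed
  qed
qed

lemma len_le: "set ws \<subseteq> D \<Longrightarrow> len D (word ws) \<le> length ws"
  unfolding len_def by (rule Least_le) blast

lemma len_ex:
  assumes "w \<in> WD"
  obtains ws where "set ws \<subseteq> D" "length ws = len D w" "word ws = w"
proof -
  obtain ws where "set ws \<subseteq> D" "w = word ws" using assms by (rule gen_groupE)
  then have "\<exists>n ws. set ws \<subseteq> D \<and> length ws = n \<and> word ws = w" by blast
  then have "\<exists>ws. set ws \<subseteq> D \<and> length ws = len D w \<and> word ws = w"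
    unfolding len_def by (rule LeastI_ex)
  then show ?thesis using that by blast
qed

lemma good_word: "set ws \<subseteq> D \<Longrightarrow> good (word ws)"
  using good_WD by (auto simp: gen_group_def)

lemma ninv_le_length: "set ws \<subseteq> D \<Longrightarrow> ninv (word ws) \<le> length ws"
proof (induction ws rule: rev_induct)
  case Nil
  have "inv_set (\<lambda>x. x) = {}" by (auto simp: inv_set_def)
  then show ?case by (simp add: ninv_def id_def)
next
  case (snoc a ws)
  then have a: "a \<in> D" and ws: "set ws \<subseteq> D" by auto
  have "ninv (word ws \<circ> rrefl a) \<le> ninv (word ws) + 1"
    using ninv_step_pos[OF good_word[OF ws] a] ninv_step_neg[OF good_word[OF ws] a]
    by (cases "word ws a \<in> Pos") auto
  then show ?case using snoc ws unfolding word_snoc length_append_singleton by linarith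
qed

lemma ninv_reduced:
  "set ws \<subseteq> D \<Longrightarrow> len D (word ws) = length ws \<Longrightarrow> ninv (word ws) = length ws"
proof (induction ws rule: rev_induct)
  case Nil
  have "inv_set (\<lambda>x. x) = {}" by (auto simp: inv_set_def)
  then show ?case by (simp add: ninv_def id_def)
next
  case (snoc a vs)
  then have a: "a \<in> D" and vs: "set vs \<subseteq> D" by auto
  have red: "len D (word vs \<circ> rrefl a) = length vs + 1" using snoc.prems(2) unfolding word_snoc by (simp add: o_def)
  have "len D (word vs) = length vs"
  proof (rule ccontr)
    assume "len D (word vs) \<noteq> length vs"
    then have lt: "len D (word vs) < length vs" using len_le[OF vs] by simp
    obtain us where us: "set us \<subseteq> D" "length us = len D (word vs)" "word us = word vs"
      using len_ex[of "word vs"] vs by (auto simp: gen_group_def)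
    have "len D (word (us @ [a])) \<le> length us + 1" using len_le[of "us @ [a]"] us a by simp
    then show False using red us lt by (simp add: word_snoc)
  qed
  then have IH: "ninv (word vs) = length vs" using snoc.IH vs by simp
  have "word vs a \<in> Pos"
  proof (rule ccontr)
    assume "word vs a \<notin> Pos"
    then obtain us where us: "set us \<subseteq> set vs" "length us + 1 = length vs" "word vs \<circ> rrefl a = word us"
      using deletion[OF vs a] by blast
    have "len D (word us) \<le> length us" using len_le us(1) vs by auto
    then show False using red us by simp
  qed
  then have "ninv (word vs \<circ> rrefl a) = ninv (word vs) + 1"
    using ninv_step_pos[OF good_word[OF vs] a] by simp
  then show ?case using IH unfolding word_snoc by (simp add: o_def)
qed

lemma len_ninv: "w \<in> WD \<Longrightarrow> len D w = ninv w"
proof -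
  assume "w \<in> WD"
  then obtain ws where ws: "set ws \<subseteq> D" "length ws = len D w" "word ws = w" by (rule len_ex)
  then show ?thesis using ninv_reduced[of ws] by simp
qed

lemma WD_comp_rrefl: "w \<in> WD \<Longrightarrow> a \<in> D \<Longrightarrow> w \<circ> rrefl a \<in> WD"
  using gen_group_comp gen_group_refl by blast

lemma len_right_pos: "w \<in> WD \<Longrightarrow> a \<in> D \<Longrightarrow> w a \<in> Pos \<Longrightarrow> len D (w \<circ> rrefl a) = len D w + 1"
  using len_ninv WD_comp_rrefl ninv_step_pos good_WD by metis

lemma len_right_neg: "w \<in> WD \<Longrightarrow> a \<in> D \<Longrightarrow> w a \<notin> Pos \<Longrightarrow> len D (w \<circ> rrefl a) + 1 = len D w"
  using len_ninv WD_comp_rrefl ninv_step_neg good_WD by metis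

lemma len_id: "len D id = 0"
proof -
  have "len D (word []) \<le> length []" using len_le[of "[]"] by simp
  then show ?thesis by simp
qed

lemma len_zero_id: "w \<in> WD \<Longrightarrow> len D w = 0 \<Longrightarrow> w = id"
proof -
  assume "w \<in> WD" "len D w = 0"
  then obtain ws where ws: "set ws \<subseteq> D" "length ws = 0" "word ws = w" by (metis len_ex)
  then show ?thesis by simp
qed

lemma len_le_N: "w \<in> WD \<Longrightarrow> len D w \<le> card Pos"
  using len_ninv ninv_le by simp

lemma cf_good_nonneg:
  assumes g: "good w" and b: "b \<in> Pos" and h: "\<And>a. a \<in> D \<Longrightarrow> cf b a \<noteq> 0 \<Longrightarrow> w a \<in> Pos"
  shows "w b \<in> Pos"
proof -
  have "cf (w b) a' \<ge> 0" if a': "a' \<in> D" for a'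
  proof -
    have "cf (w b) a' = (\<Sum>a\<in>D. cf b a * cf (w a) a')" using cf_lin[OF good_linear[OF g] a'] .
    also have "\<dots> \<ge> 0"
    proof (rule sum_nonneg)
      fix a assume a: "a \<in> D"
      show "cf b a * cf (w a) a' \<ge> 0"
      proof (cases "cf b a = 0")
        case False
        then have "w a \<in> Pos" using h a by blast
        then have "cf (w a) a' \<ge> 0" using a' by (auto simp: Pos_def)
        moreover have "cf b a \<ge> 0" using b a by (auto simp: Pos_def)
        ultimately show ?thesis by simp
      qed simp
    qed
    finally show ?thesis .
  qed
  moreover have "w b \<in> R" using g b Pos_R by (auto simp: good_def)
  ultimately show ?thesis by (simp add: Pos_def)
qed

lemma cf_good_nonpos:
  assumes g: "good w" and b: "b \<in> Pos" and h: "\<And>a. a \<in> D \<Longrightarrow> cf b a \<noteq> 0 \<Longrightarrow> w a \<notin> Pos"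
  shows "w b \<notin> Pos"
proof -
  have g': "good (\<lambda>x. - w x)"
    using g unfolding good_def isom_def by (auto intro: negR linear_compose_neg[unfolded o_def])
  have "(\<lambda>x. - w x) b \<in> Pos"
  proof (rule cf_good_nonneg[OF g' b])
    fix a assume "a \<in> D" "cf b a \<noteq> 0"
    then have "w a \<notin> Pos" using h by blast
    moreover have "w a \<in> R" using g \<open>a \<in> D\<close> DR by (auto simp: good_def)
    ultimately show "- w a \<in> Pos" using neg_iff by blast
  qed
  then show ?thesis using not_Pos_and_neg by force
qed

lemma WD_ident:
  assumes w: "w \<in> WD" and h: "\<And>a. a \<in> D \<Longrightarrow> w a \<in> Pos"
  shows "w = id"
proof -
  have "inv_set w = {}"
    using cf_good_nonneg[OF good_WD[OF w]] h by (auto simp: inv_set_def)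
  then have "len D w = 0" using len_ninv[OF w] by (simp add: ninv_def)
  then show ?thesis using len_zero_id w by blast
qed

end


context RS
begin

definition hti :: "'a \<Rightarrow> int" where
  "hti b = (\<Sum>a\<in>D. \<lfloor>cf b a\<rfloor>)"

lemma hti_eq: "b \<in> R \<Longrightarrow> of_int (hti b) = (\<Sum>a\<in>D. cf b a)"
proof -
  assume b: "b \<in> R"
  have "of_int (hti b) = (\<Sum>a\<in>D. real_of_int \<lfloor>cf b a\<rfloor>)" by (simp add: hti_def)
  also have "\<dots> = (\<Sum>a\<in>D. cf b a)"
    by (rule sum.cong) (use cf_root_int[OF b] in \<open>auto elim!: Ints_cases\<close>)
  finally show ?thesis .
qed

lemma hti_nonneg: "b \<in> Pos \<Longrightarrow> hti b \<ge> 0"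
  unfolding hti_def Pos_def by (auto intro!: sum_nonneg)

lemma inner_expand: "b \<bullet> b = (\<Sum>a\<in>D. cf b a * (a \<bullet> b))"
proof -
  have "b \<bullet> b = (\<Sum>a\<in>D. cf b a *\<^sub>R a) \<bullet> b" using cf_repr[of b] by simp
  also have "\<dots> = (\<Sum>a\<in>D. cf b a * (a \<bullet> b))" by (simp add: inner_sum_left)
  finally show ?thesis .
qed

lemma pos_conj_simple_aux:
  "\<forall>b. b \<in> Pos \<longrightarrow> nat (hti b) = n \<longrightarrow> (\<exists>w\<in>WD. \<exists>a\<in>D. b = w a)"
proof (induction n rule: less_induct)
  case (less n)
  show ?case
  proof (intro allI impI)
    fix b assume b: "b \<in> Pos" and n: "nat (hti b) = n"
    show "\<exists>w\<in>WD. \<exists>a\<in>D. b = w a"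
    proof (cases "b \<in> D")
      case True then show ?thesis by (intro bexI[of _ id]) auto
    next
      case False
      have bR: "b \<in> R" using b Pos_R by auto
      have "b \<noteq> 0" using bR zeroR by auto
      then have "b \<bullet> b > 0" by simp
      have "\<exists>a\<in>D. a \<bullet> b > 0"
      proof (rule ccontr)
        assume "\<not> ?thesis"
        then have "\<forall>a\<in>D. a \<bullet> b \<le> 0" by auto
        then have "(\<Sum>a\<in>D. cf b a * (a \<bullet> b)) \<le> 0"
          using b by (intro sum_nonpos) (auto simp: Pos_def mult_nonneg_nonpos)
        then show False using \<open>b \<bullet> b > 0\<close> inner_expand[of b] by simp
      qed
      then obtain a where a: "a \<in> D" "a \<bullet> b > 0" by blast
      have ab: "b \<noteq> a" using False a by auto
      define c where "c = rrefl a b"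
      have cP: "c \<in> Pos" using simple_perm[OF a(1) b ab] by (simp add: c_def)
      define k where "k = 2 * (b \<bullet> a) / (a \<bullet> a)"
      have "a \<bullet> a > 0" using D_nz a by simp
      then have kpos: "k > 0" using a by (simp add: k_def inner_commute)
      have cfc: "cf c a' = cf b a' - k * (if a' = a then 1 else 0)" if "a' \<in> D" for a'
        using that a by (simp only: c_def rrefl_eq cf_diff cf_scale cf_simple k_def)
      have "(\<Sum>a'\<in>D. cf c a') = (\<Sum>a'\<in>D. cf b a') - k"
        using a(1) finD by (simp add: cfc sum_subtractf if_distrib[of "\<lambda>x. k * x"] sum.delta' cong: if_cong)
      then have "of_int (hti c) = of_int (hti b) - k"
        using hti_eq bR cP Pos_R by simp
      then have "hti c < hti b" using kpos by linarith
      then have lt: "nat (hti c) < n" using hti_nonneg[OF cP] n by linarith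
      obtain w a' where w: "w \<in> WD" "a' \<in> D" "c = w a'" using less.IH[OF lt] cP by blast
      have "b = rrefl a c" by (simp add: c_def)
      also have "\<dots> = (rrefl a \<circ> w) a'" using w by simp
      finally show ?thesis using w a gen_group_comp[OF gen_group_refl[OF a(1)] w(1)] by blast
    qed
  qed
qed

lemma pos_conj_simple: "b \<in> Pos \<Longrightarrow> \<exists>w\<in>WD. \<exists>a\<in>D. b = w a"
  using pos_conj_simple_aux by blast

lemma WD_conj_refl:
  assumes w: "w \<in> WD" and a: "a \<in> D"
  shows "rrefl (w a) \<in> WD"
proof -
  obtain g where g: "g \<in> WD" "g \<circ> w = id" "w \<circ> g = id" using w by (rule gen_group_inv)
  have "w \<circ> rrefl a = rrefl (w a) \<circ> w" using isom_conj_comp[OF isom_gen[OF w]] .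
  then have "w \<circ> rrefl a \<circ> g = rrefl (w a) \<circ> (w \<circ> g)" by (simp add: comp_assoc)
  then have "rrefl (w a) = w \<circ> rrefl a \<circ> g" using g(3) by simp
  then show ?thesis using g w a by (metis gen_group_comp gen_group_refl)
qed

lemma refl_WD: "b \<in> R \<Longrightarrow> rrefl b \<in> WD"
proof -
  assume bR: "b \<in> R"
  have "\<exists>c\<in>Pos. rrefl b = rrefl c"
    using Pos_or_neg[OF bR] rrefl_neg[of b] by (metis minus_minus)
  then obtain c where c: "c \<in> Pos" "rrefl b = rrefl c" by blast
  obtain w a where "w \<in> WD" "a \<in> D" "c = w a" using pos_conj_simple[OF c(1)] by blast
  then show ?thesis using c WD_conj_refl by simp
qed

lemma W_eq: "gen_group R = WD"
proof
  show "gen_group R \<subseteq> WD"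
  proof
    fix w assume "w \<in> gen_group R"
    then obtain ws where ws: "set ws \<subseteq> R" "w = word ws" by (rule gen_groupE)
    have "word ws \<in> WD" using ws(1)
      by (induction ws) (auto intro: gen_group_comp refl_WD)
    then show "w \<in> WD" using ws by simp
  qed
  show "WD \<subseteq> gen_group R" using gen_group_mono DR by blast
qed

lemma root_conj_simple: "b \<in> R \<Longrightarrow> \<exists>w\<in>WD. \<exists>a\<in>D. b = w a \<or> b = - w a"
proof -
  assume bR: "b \<in> R"
  show ?thesis
  proof (cases "b \<in> Pos")
    case True then show ?thesis using pos_conj_simple by blast
  next
    case False
    then have "- b \<in> Pos" using neg_iff bR by blast
    then obtain w a where "w \<in> WD" "a \<in> D" "- b = w a" using pos_conj_simple by blast
    then show ?thesis by (metis minus_minus)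
  qed
qed

end


context RS
begin

definition PhiJ :: "'a set \<Rightarrow> 'a set" where
  "PhiJ J = {b \<in> R. \<forall>a\<in>D - J. cf b a = 0}"

lemma gen_J_WD: "J \<subseteq> D \<Longrightarrow> gen_group J \<subseteq> WD"
  by (rule gen_group_mono)

lemma J_cf_fix:
  assumes J: "J \<subseteq> D" and x: "x \<in> gen_group J" and a: "a \<in> D - J"
  shows "cf (x b) a = cf b a"
proof -
  obtain ws where ws: "set ws \<subseteq> J" "x = word ws" using x by (rule gen_groupE)
  have "cf (word ws b) a = cf b a" using ws(1)
  proof (induction ws)
    case Nil then show ?case by simp
  next
    case (Cons c ws)
    then have c: "c \<in> D" "c \<noteq> a" using J a by auto
    have "cf (word (c # ws) b) a = cf (word ws b) a - (2 * (word ws b \<bullet> c) / (c \<bullet> c)) * cf c a"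
      using a by (simp add: rrefl_eq cf_diff cf_scale)
    also have "cf c a = 0" using cf_simple[of a c] c a by auto
    finally show ?case using Cons by simp
  qed
  then show ?thesis using ws by simp
qed

lemma J_PhiJ:
  assumes J: "J \<subseteq> D" and x: "x \<in> gen_group J" and b: "b \<in> PhiJ J"
  shows "x b \<in> PhiJ J"
proof -
  have "x b \<in> R" using gen_R[of J x b] J DR x b by (auto simp: PhiJ_def)
  then show ?thesis using J_cf_fix[OF J x] b by (auto simp: PhiJ_def)
qed

lemma J_out:
  assumes J: "J \<subseteq> D" and x: "x \<in> gen_group J" and b: "b \<in> Pos" "b \<notin> PhiJ J"
  shows "x b \<in> Pos" "x b \<notin> PhiJ J"
proof -
  have bR: "b \<in> R" using b Pos_R by auto
  then obtain a where a: "a \<in> D - J" "cf b a \<noteq> 0" using b by (auto simp: PhiJ_def)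
  have "cf b a \<ge> 0" using b a by (auto simp: Pos_def)
  then have gt: "cf (x b) a > 0" using a J_cf_fix[OF J x a(1)] by simp
  have xbR: "x b \<in> R" using gen_R[of J x b] J DR x bR by auto
  show "x b \<in> Pos" using Pos_by_cf[OF xbR _ gt] a by auto
  show "x b \<notin> PhiJ J"
  proof
    assume "x b \<in> PhiJ J"
    then have "cf (x b) a = 0" using a unfolding PhiJ_def by blast
    then show False using gt by simp
  qed
qed

lemma J_simple_in: "J \<subseteq> D \<Longrightarrow> a \<in> J \<Longrightarrow> a \<in> PhiJ J"
  using DR by (auto simp: PhiJ_def cf_simple)

lemma PhiJ_neg: "b \<in> PhiJ J \<Longrightarrow> - b \<in> PhiJ J"
  by (auto simp: PhiJ_def negR cf_minus)

lemma sign_pos: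
  assumes g: "good v" and J: "J \<subseteq> D" and h: "\<forall>a\<in>J. v a \<in> Pos"
    and b: "b \<in> Pos" "b \<in> PhiJ J"
  shows "v b \<in> Pos"
proof (rule cf_good_nonneg[OF g b(1)])
  fix a assume "a \<in> D" "cf b a \<noteq> 0"
  then have "a \<in> J" using b(2) by (auto simp: PhiJ_def)
  then show "v a \<in> Pos" using h by blast
qed

lemma sign_neg:
  assumes g: "good v" and J: "J \<subseteq> D" and h: "\<forall>a\<in>J. v a \<notin> Pos"
    and b: "b \<in> Pos" "b \<in> PhiJ J"
  shows "v b \<notin> Pos"
proof (rule cf_good_nonpos[OF g b(1)])
  fix a assume "a \<in> D" "cf b a \<noteq> 0"
  then have "a \<in> J" using b(2) by (auto simp: PhiJ_def)
  then show "v a \<notin> Pos" using h by blast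
qed

lemma J_ident:
  assumes J: "J \<subseteq> D" and x: "x \<in> gen_group J" and h: "\<forall>a\<in>J. x a \<in> Pos"
  shows "x = id"
proof (rule WD_ident)
  show "x \<in> WD" using x gen_J_WD[OF J] by blast
  fix a assume a: "a \<in> D"
  show "x a \<in> Pos"
  proof (cases "a \<in> J")
    case True then show ?thesis using h by blast
  next
    case False
    have "a \<notin> PhiJ J" using False a by (auto simp: PhiJ_def cf_simple)
    then show ?thesis using J_out[OF J x D_Pos[OF a]] by blast
  qed
qed

lemma J_unique_neg:
  assumes J: "J \<subseteq> D" and x: "x \<in> gen_group J" and y: "y \<in> gen_group J"
    and hx: "\<forall>a\<in>J. x a \<notin> Pos" and hy: "\<forall>a\<in>J. y a \<notin> Pos"
  shows "x = y"
proof -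
  obtain g where g: "g \<in> gen_group J" "g \<circ> x = id" "x \<circ> g = id" using x by (rule gen_group_inv)
  have gx: "good x" using x gen_J_WD[OF J] good_WD by blast
  have z: "g \<circ> y \<in> gen_group J" using g y gen_group_comp by blast
  have "\<forall>a\<in>J. (g \<circ> y) a \<in> Pos"
  proof
    fix a assume a: "a \<in> J"
    have aD: "a \<in> D" using a J by auto
    have yaP: "y a \<in> PhiJ J" using J_PhiJ[OF J y J_simple_in[OF J a]] .
    have gyaP: "g (y a) \<in> PhiJ J" using J_PhiJ[OF J g(1) yaP] .
    then have gyaR: "g (y a) \<in> R" by (simp add: PhiJ_def)
    show "(g \<circ> y) a \<in> Pos"
    proof (rule ccontr)
      assume "\<not> ?thesis"
      then have "- g (y a) \<in> Pos" using neg_iff gyaR by auto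
      moreover have "- g (y a) \<in> PhiJ J" using PhiJ_neg[OF gyaP] .
      ultimately have "x (- g (y a)) \<notin> Pos" using sign_neg[OF gx J hx] by blast
      moreover have "x (- g (y a)) = - y a"
        using good_neg[OF gx] g(3) by (metis comp_apply id_apply)
      moreover have "y a \<in> R" using yaP by (simp add: PhiJ_def)
      then have "- y a \<in> Pos" using neg_iff[of "y a"] hy a by blast
      ultimately show False by simp
    qed
  qed
  then have "g \<circ> y = id" using J_ident[OF J z] by blast
  then have "x \<circ> (g \<circ> y) = x" by simp
  then show ?thesis using g(3) by (metis comp_assoc id_comp)
qed

lemma J_max_exists:
  assumes J: "J \<subseteq> D"
  shows "\<exists>x\<in>gen_group J. \<forall>y\<in>gen_group J. len D y \<le> len D x"
proof -
  let ?S = "len D ` gen_group J"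
  have fin: "finite ?S"
    by (rule finite_subset[of _ "{0..card Pos}"]) (use len_le_N gen_J_WD[OF J] in auto)
  have ne: "?S \<noteq> {}" using gen_group_id[of J] by blast
  obtain x where x: "x \<in> gen_group J" "len D x = Max ?S" using Max_in[OF fin ne] by auto
  show ?thesis using x Max_ge[OF fin] by (intro bexI[of _ x]) auto
qed

lemma J_max_neg:
  assumes J: "J \<subseteq> D" and x: "x \<in> gen_group J" and m: "\<forall>y\<in>gen_group J. len D y \<le> len D x"
  shows "\<forall>a\<in>J. x a \<notin> Pos"
proof (intro ballI notI)
  fix a assume a: "a \<in> J" and p: "x a \<in> Pos"
  have xW: "x \<in> WD" using x gen_J_WD[OF J] by blast
  have "len D (x \<circ> rrefl a) = len D x + 1" using len_right_pos[OF xW _ p] a J by auto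
  moreover have "x \<circ> rrefl a \<in> gen_group J" using x a gen_group_comp gen_group_refl by blast
  ultimately show False using m by fastforce
qed

lemma longest_J:
  assumes J: "J \<subseteq> D"
  shows "longest D (gen_group J) \<in> gen_group J" "\<forall>a\<in>J. longest D (gen_group J) a \<notin> Pos"
proof -
  obtain x where x: "x \<in> gen_group J" "\<forall>y\<in>gen_group J. len D y \<le> len D x"
    using J_max_exists[OF J] by blast
  have "longest D (gen_group J) = x"
    unfolding longest_def
  proof (rule the_equality)
    show "x \<in> gen_group J \<and> (\<forall>v\<in>gen_group J. len D v \<le> len D x)" using x by blast
    fix w assume w: "w \<in> gen_group J \<and> (\<forall>v\<in>gen_group J. len D v \<le> len D w)"
    show "w = x"
      using J_unique_neg[OF J _ x(1) J_max_neg[OF J _ _] J_max_neg[OF J x]] w by blast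
  qed
  then show "longest D (gen_group J) \<in> gen_group J" "\<forall>a\<in>J. longest D (gen_group J) a \<notin> Pos"
    using x J_max_neg[OF J x] by auto
qed

lemma longest_J_unique:
  assumes J: "J \<subseteq> D" and x: "x \<in> gen_group J" and h: "\<forall>a\<in>J. x a \<notin> Pos"
  shows "longest D (gen_group J) = x"
  using J_unique_neg[OF J longest_J(1)[OF J] x longest_J(2)[OF J] h] .

lemma longest_invol:
  assumes J: "J \<subseteq> D"
  shows "longest D (gen_group J) \<circ> longest D (gen_group J) = id"
proof -
  let ?x = "longest D (gen_group J)"
  have x: "?x \<in> gen_group J" and hx: "\<forall>a\<in>J. ?x a \<notin> Pos" using longest_J[OF J] by auto
  have gx: "good ?x" using x gen_J_WD[OF J] good_WD by blast
  obtain g where g: "g \<in> gen_group J" "g \<circ> ?x = id" "?x \<circ> g = id" using x by (rule gen_group_inv)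
  have "\<forall>a\<in>J. g a \<notin> Pos"
  proof (intro ballI notI)
    fix a assume a: "a \<in> J" and p: "g a \<in> Pos"
    have "g a \<in> PhiJ J" using J_PhiJ[OF J g(1) J_simple_in[OF J a]] .
    then have "?x (g a) \<notin> Pos" using sign_neg[OF gx J hx p] by blast
    moreover have "?x (g a) = a" using g(3) by (metis comp_apply id_apply)
    ultimately show False using D_Pos a J by auto
  qed
  then have "g = ?x" using J_unique_neg[OF J g(1) x] hx by blast
  then show ?thesis using g by simp
qed

lemma longest_maps_neg:
  assumes J: "J \<subseteq> D" and b: "b \<in> Pos" "b \<in> PhiJ J"
  shows "longest D (gen_group J) b \<notin> Pos"
proof -
  have x: "longest D (gen_group J) \<in> gen_group J" and hx: "\<forall>a\<in>J. longest D (gen_group J) a \<notin> Pos"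
    using longest_J[OF J] by auto
  have gx: "good (longest D (gen_group J))" using x gen_J_WD[OF J] good_WD by blast
  show ?thesis using sign_neg[OF gx J hx b] .
qed

end


context RS
begin

lemma len_add:
  assumes P: "P \<subseteq> D" and v: "v \<in> WD" and hv: "\<forall>a\<in>P. v a \<in> Pos" and x: "x \<in> gen_group P"
  shows "len D (v \<circ> x) = len D v + len D x"
proof -
  obtain xs where xs: "set xs \<subseteq> P" "x = word xs" using x by (rule gen_groupE)
  have gv: "good v" using good_WD[OF v] .
  have "len D (v \<circ> word xs) = len D v + len D (word xs)" using xs(1)
  proof (induction xs rule: rev_induct)
    case Nil then show ?case using len_id by (simp add: id_def)
  next
    case (snoc a xs)
    then have a: "a \<in> P" and xsP: "set xs \<subseteq> P" by auto
    have aD: "a \<in> D" using a P by auto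
    let ?y = "word xs"
    have yP: "?y \<in> gen_group P" using xsP by (auto simp: gen_group_def)
    have yW: "?y \<in> WD" using yP gen_J_WD[OF P] by blast
    have vyW: "v \<circ> ?y \<in> WD" using v yW gen_group_comp by blast
    have IH: "len D (v \<circ> ?y) = len D v + len D ?y" using snoc xsP by blast
    have yaPhi: "?y a \<in> PhiJ P" using J_PhiJ[OF P yP J_simple_in[OF P a]] .
    have yaR: "?y a \<in> R" using yaPhi by (simp add: PhiJ_def)
    have e1: "v \<circ> word (xs @ [a]) = (v \<circ> ?y) \<circ> rrefl a" by (simp add: word_snoc comp_assoc)
    have e2: "word (xs @ [a]) = ?y \<circ> rrefl a" by (simp add: word_snoc)
    show ?case
    proof (cases "?y a \<in> Pos")
      case True
      then have "v (?y a) \<in> Pos" using sign_pos[OF gv P hv True yaPhi] by blast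
      then have "len D ((v \<circ> ?y) \<circ> rrefl a) = len D (v \<circ> ?y) + 1"
        using len_right_pos[OF vyW aD] by simp
      moreover have "len D (?y \<circ> rrefl a) = len D ?y + 1" using len_right_pos[OF yW aD True] .
      ultimately show ?thesis unfolding e1 e2 using IH by (simp add: o_def)
    next
      case False
      then have n: "- ?y a \<in> Pos" using neg_iff yaR by blast
      have "v (- ?y a) \<in> Pos" using sign_pos[OF gv P hv n PhiJ_neg[OF yaPhi]] .
      then have "v (?y a) \<notin> Pos" using good_neg[OF gv] not_Pos_and_neg by fastforce
      then have "len D ((v \<circ> ?y) \<circ> rrefl a) + 1 = len D (v \<circ> ?y)"
        using len_right_neg[OF vyW aD] by simp
      moreover have "len D (?y \<circ> rrefl a) + 1 = len D ?y" using len_right_neg[OF yW aD False] .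
      ultimately show ?thesis unfolding e1 e2 using IH by (simp add: o_def)
    qed
  qed
  then show ?thesis using xs by simp
qed

lemma minrep_iff:
  assumes P: "P \<subseteq> D"
  shows "v \<in> min_coset_reps R D P \<longleftrightarrow> v \<in> WD \<and> (\<forall>a\<in>P. v a \<in> Pos)"
proof
  assume v: "v \<in> min_coset_reps R D P"
  then have vW: "v \<in> WD" and m: "\<forall>x\<in>gen_group P. len D v \<le> len D (v \<circ> x)"
    unfolding min_coset_reps_def W_eq by blast+
  have "v a \<in> Pos" if a: "a \<in> P" for a
  proof (rule ccontr)
    assume n: "v a \<notin> Pos"
    have "len D (v \<circ> rrefl a) + 1 = len D v" using len_right_neg[OF vW _ n] a P by blast
    moreover have "len D v \<le> len D (v \<circ> rrefl a)" using m gen_group_refl[OF a] by blast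
    ultimately show False by linarith
  qed
  then show "v \<in> WD \<and> (\<forall>a\<in>P. v a \<in> Pos)" using vW by blast
next
  assume h: "v \<in> WD \<and> (\<forall>a\<in>P. v a \<in> Pos)"
  have "\<forall>x\<in>gen_group P. len D v \<le> len D (v \<circ> x)"
  proof
    fix x assume "x \<in> gen_group P"
    then have "len D (v \<circ> x) = len D v + len D x" using len_add[OF P] h by blast
    then show "len D v \<le> len D (v \<circ> x)" by simp
  qed
  then show "v \<in> min_coset_reps R D P"
    unfolding min_coset_reps_def W_eq using h by blast
qed

lemma minrep_WD: "P \<subseteq> D \<Longrightarrow> v \<in> min_coset_reps R D P \<Longrightarrow> v \<in> WD"
  using minrep_iff by blast

lemma minrep_pos: "P \<subseteq> D \<Longrightarrow> v \<in> min_coset_reps R D P \<Longrightarrow> a \<in> P \<Longrightarrow> v a \<in> Pos"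
  using minrep_iff by blast

lemma minrep_len_add:
  "P \<subseteq> D \<Longrightarrow> v \<in> min_coset_reps R D P \<Longrightarrow> x \<in> gen_group P \<Longrightarrow> len D (v \<circ> x) = len D v + len D x"
  using len_add minrep_iff by blast

lemma minrep_unique:
  assumes P: "P \<subseteq> D" and v: "v \<in> min_coset_reps R D P" and v': "v \<circ> z \<in> min_coset_reps R D P"
    and z: "z \<in> gen_group P"
  shows "z = id"
proof -
  obtain g where g: "g \<in> gen_group P" "g \<circ> z = id" "z \<circ> g = id" using z by (rule gen_group_inv)
  have "v = (v \<circ> z) \<circ> g" using g(3) by (simp add: comp_assoc)
  then have l1: "len D v = len D (v \<circ> z) + len D g" using minrep_len_add[OF P v' g(1)] by simp
  have l2: "len D (v \<circ> z) = len D v + len D z" using minrep_len_add[OF P v z] .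
  have "len D z = 0" using l1 l2 by simp
  then show ?thesis using len_zero_id z gen_J_WD[OF P] by blast
qed

lemma projP_eq:
  assumes P: "P \<subseteq> D" and v: "v \<in> min_coset_reps R D P" and x: "x \<in> gen_group P" and e: "v = w \<circ> x"
  shows "projP R D P w = v"
  unfolding projP_def
proof (rule the_equality)
  show "v \<in> min_coset_reps R D P \<and> (\<exists>x\<in>gen_group P. v = w \<circ> x)" using v x e by blast
  fix v' assume h: "v' \<in> min_coset_reps R D P \<and> (\<exists>x\<in>gen_group P. v' = w \<circ> x)"
  then obtain x' where x': "x' \<in> gen_group P" "v' = w \<circ> x'" by blast
  obtain g where g: "g \<in> gen_group P" "g \<circ> x = id" "x \<circ> g = id" using x by (rule gen_group_inv)
  have "w = v \<circ> g" using e g(3) by (metis comp_assoc comp_id)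
  then have "v' = v \<circ> (g \<circ> x')" using x' by (simp add: comp_assoc)
  moreover have "g \<circ> x' \<in> gen_group P" using g x' gen_group_comp by blast
  ultimately have "g \<circ> x' = id" using minrep_unique[OF P v] h by blast
  then show "v' = v" using \<open>v' = v \<circ> (g \<circ> x')\<close> by simp
qed

lemma projP_ex:
  assumes P: "P \<subseteq> D" and w: "w \<in> WD"
  shows "\<exists>x\<in>gen_group P. w \<circ> x \<in> min_coset_reps R D P"
proof -
  obtain x where x: "x \<in> gen_group P" "\<forall>y. y \<in> gen_group P \<longrightarrow> len D (w \<circ> x) \<le> len D (w \<circ> y)"
    using ex_has_least_nat[of "\<lambda>y. y \<in> gen_group P" id "\<lambda>y. len D (w \<circ> y)"] by auto
  have "w \<circ> x \<in> min_coset_reps R D P"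
    unfolding min_coset_reps_def
  proof (intro CollectI conjI ballI)
    show "w \<circ> x \<in> weyl_group R" using W_eq w x gen_J_WD[OF P] gen_group_comp by blast
    fix y assume y: "y \<in> gen_group P"
    have "x \<circ> y \<in> gen_group P" using x y gen_group_comp by blast
    then show "len D (w \<circ> x) \<le> len D (w \<circ> x \<circ> y)" using x(2) by (simp add: comp_assoc)
  qed
  then show ?thesis using x by blast
qed

lemma projP_props:
  assumes P: "P \<subseteq> D" and w: "w \<in> WD"
  shows "projP R D P w \<in> min_coset_reps R D P" "\<exists>x\<in>gen_group P. w = projP R D P w \<circ> x"
proof -
  obtain x where x: "x \<in> gen_group P" "w \<circ> x \<in> min_coset_reps R D P" using projP_ex[OF P w] by blast
  have e: "projP R D P w = w \<circ> x" using projP_eq[OF P x(2) x(1)] by simp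
  then show "projP R D P w \<in> min_coset_reps R D P" using x by simp
  obtain g where g: "g \<in> gen_group P" "g \<circ> x = id" "x \<circ> g = id" using x(1) by (rule gen_group_inv)
  have "w = (w \<circ> x) \<circ> g" using g(3) by (simp add: comp_assoc)
  then show "\<exists>x\<in>gen_group P. w = projP R D P w \<circ> x" using e g(1) by auto
qed

lemma projP_len:
  assumes P: "P \<subseteq> D" and w: "w \<in> WD"
  shows "len D (projP R D P w) \<le> len D w"
proof -
  obtain x where x: "x \<in> gen_group P" "w = projP R D P w \<circ> x" using projP_props(2)[OF P w] by blast
  have "len D w = len D (projP R D P w) + len D x"
    using minrep_len_add[OF P projP_props(1)[OF P w] x(1)] x(2) by simp
  then show ?thesis by simp
qed

lemma projP_minrep:
  assumes P: "P \<subseteq> D" and v: "v \<in> min_coset_reps R D P" and x: "x \<in> gen_group P"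
  shows "projP R D P (v \<circ> x) = v"
proof -
  obtain g where g: "g \<in> gen_group P" "g \<circ> x = id" "x \<circ> g = id" using x by (rule gen_group_inv)
  have "v = (v \<circ> x) \<circ> g" using g(3) by (simp add: comp_assoc)
  then show ?thesis using projP_eq[OF P v g(1)] by simp
qed

lemma projP_self:
  "P \<subseteq> D \<Longrightarrow> v \<in> min_coset_reps R D P \<Longrightarrow> projP R D P v = v"
  using projP_minrep[of P v id] by simp

lemma minrep_len_eq:
  assumes P: "P \<subseteq> D" and w: "w \<in> WD" and l: "len D (projP R D P w) = len D w"
  shows "w \<in> min_coset_reps R D P"
proof -
  obtain x where x: "x \<in> gen_group P" "w = projP R D P w \<circ> x" using projP_props(2)[OF P w] by blast
  have "len D w = len D (projP R D P w) + len D x"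
    using minrep_len_add[OF P projP_props(1)[OF P w] x(1)] x(2) by simp
  then have "len D x = 0" using l by simp
  then have "x = id" using len_zero_id x(1) gen_J_WD[OF P] by blast
  then show ?thesis using x projP_props(1)[OF P w] by simp
qed

abbreviation ww0 where "ww0 \<equiv> longest D WD"

lemma w0_WD: "ww0 \<in> WD"
  using longest_J(1)[of D] by simp

lemma w0_invol: "ww0 \<circ> ww0 = id"
  using longest_invol[of D] by simp

lemma PhiJ_D: "PhiJ D = R"
  by (auto simp: PhiJ_def)

lemma w0_neg: "b \<in> Pos \<Longrightarrow> ww0 b \<notin> Pos"
  using longest_maps_neg[of D b] PhiJ_D Pos_R by auto

lemma w0_pos: "b \<in> R \<Longrightarrow> b \<notin> Pos \<Longrightarrow> ww0 b \<in> Pos"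
proof -
  assume b: "b \<in> R" "b \<notin> Pos"
  then have "- b \<in> Pos" using neg_iff by blast
  then have "ww0 (- b) \<notin> Pos" using w0_neg by blast
  moreover have "ww0 b \<in> R" using WD_R[OF w0_WD b(1)] .
  ultimately show ?thesis using good_neg[OF good_WD[OF w0_WD]] neg_iff by fastforce
qed

lemma len_w0_comp:
  assumes z: "z \<in> WD"
  shows "len D (ww0 \<circ> z) + len D z = card Pos"
proof -
  have gz: "good z" using good_WD[OF z] .
  have "inv_set (ww0 \<circ> z) = Pos - inv_set z"
  proof (intro set_eqI iffI)
    fix b assume "b \<in> inv_set (ww0 \<circ> z)"
    then have b: "b \<in> Pos" "ww0 (z b) \<notin> Pos" by (auto simp: inv_set_def)
    have "z b \<in> R" using gz b Pos_R by (auto simp: good_def)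
    then have "z b \<in> Pos" using w0_pos b by blast
    then show "b \<in> Pos - inv_set z" using b by (auto simp: inv_set_def)
  next
    fix b assume "b \<in> Pos - inv_set z"
    then have b: "b \<in> Pos" "z b \<in> Pos" by (auto simp: inv_set_def)
    then show "b \<in> inv_set (ww0 \<circ> z)" using w0_neg by (auto simp: inv_set_def)
  qed
  then have "ninv (ww0 \<circ> z) = card Pos - ninv z"
    unfolding ninv_def using card_Diff_subset[OF inv_set_fin inv_set_sub] by simp
  moreover have "ninv z \<le> card Pos" by (rule ninv_le)
  moreover have "ww0 \<circ> z \<in> WD" using w0_WD z gen_group_comp by blast
  ultimately show ?thesis using len_ninv z by simp
qed

end


lemma gen_inv:
  assumes "w \<in> gen_group S"
  shows "inv w \<in> gen_group S" "inv w \<circ> w = id" "w \<circ> inv w = id"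
proof -
  obtain g where g: "g \<in> gen_group S" "g \<circ> w = id" "w \<circ> g = id" using assms by (rule gen_group_inv)
  have "inv w = g" using inv_unique_comp[OF g(3) g(2)] .
  then show "inv w \<in> gen_group S" "inv w \<circ> w = id" "w \<circ> inv w = id" using g by auto
qed

lemma gen_inv_app: "w \<in> gen_group S \<Longrightarrow> inv w (w x) = x"
  using gen_inv(2) by (metis comp_apply id_apply)

lemma gen_app_inv: "w \<in> gen_group S \<Longrightarrow> w (inv w x) = x"
  using gen_inv(3) by (metis comp_apply id_apply)

lemma inv_comp_rrefl:
  assumes "w \<in> gen_group S"
  shows "inv (rrefl g \<circ> w) = inv w \<circ> rrefl g"
proof (rule inv_unique_comp)
  show "(rrefl g \<circ> w) \<circ> (inv w \<circ> rrefl g) = id"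
    using gen_inv(3)[OF assms] by (simp add: fun_eq_iff gen_app_inv[OF assms])
  show "(inv w \<circ> rrefl g) \<circ> (rrefl g \<circ> w) = id"
    using gen_inv(2)[OF assms] by (simp add: fun_eq_iff gen_inv_app[OF assms])
qed

context RS
begin

lemma len_inv:
  assumes w: "w \<in> WD"
  shows "len D (inv w) = len D w"
proof -
  have le: "len D (inv u) \<le> len D u" if u: "u \<in> WD" for u
  proof -
    obtain ws where ws: "set ws \<subseteq> D" "length ws = len D u" "word ws = u" using u by (rule len_ex)
    have "inv u = word (rev ws)" unfolding ws(3)[symmetric]
      by (rule inv_unique_comp[OF word_comp_rev word_rev_comp])
    then show ?thesis using len_le[of "rev ws"] ws by simp
  qed
  have "len D (inv (inv w)) \<le> len D (inv w)" using le gen_inv(1)[OF w] by blast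
  moreover have "inv (inv w) = w"
    using inv_unique_comp[OF gen_inv(2)[OF w] gen_inv(3)[OF w]] .
  ultimately show ?thesis using le[OF w] by simp
qed

lemma len_left_pos:
  assumes w: "w \<in> WD" and g: "g \<in> D" and p: "inv w g \<in> Pos"
  shows "len D (rrefl g \<circ> w) = len D w + 1"
proof -
  have sw: "rrefl g \<circ> w \<in> WD" using gen_group_comp[OF gen_group_refl[OF g] w] .
  have "len D (rrefl g \<circ> w) = len D (inv (rrefl g \<circ> w))" using len_inv[OF sw] by simp
  also have "\<dots> = len D (inv w \<circ> rrefl g)" using inv_comp_rrefl[OF w] by simp
  also have "\<dots> = len D (inv w) + 1" using len_right_pos[OF gen_inv(1)[OF w] g p] .
  finally show ?thesis using len_inv[OF w] by simp
qed

lemma len_left_neg: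
  assumes w: "w \<in> WD" and g: "g \<in> D" and p: "inv w g \<notin> Pos"
  shows "len D (rrefl g \<circ> w) + 1 = len D w"
proof -
  have sw: "rrefl g \<circ> w \<in> WD" using gen_group_comp[OF gen_group_refl[OF g] w] .
  have "len D (rrefl g \<circ> w) = len D (inv (rrefl g \<circ> w))" using len_inv[OF sw] by simp
  also have "\<dots> = len D (inv w \<circ> rrefl g)" using inv_comp_rrefl[OF w] by simp
  finally show ?thesis using len_right_neg[OF gen_inv(1)[OF w] g p] len_inv[OF w] by simp
qed

lemma cover_len: "bruhat_cover R D u v \<Longrightarrow> len D v = len D u + 1"
  by (simp add: bruhat_cover_def)

lemma cover_WD: "bruhat_cover R D u v \<Longrightarrow> u \<in> WD \<and> v \<in> WD"
  by (simp add: bruhat_cover_def W_eq)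

lemma bruhat_le_len: "bruhat_le R D u v \<Longrightarrow> u = v \<or> len D u < len D v"
  unfolding bruhat_le_def
proof (induction rule: rtranclp_induct)
  case base then show ?case by simp
next
  case (step y z)
  then show ?case using cover_len[OF step(2)] by auto
qed

lemma bruhat_lt_len: "bruhat_lt R D u v \<Longrightarrow> len D u < len D v"
  using bruhat_le_len by (auto simp: bruhat_lt_def)

lemma cover_right:
  assumes w: "w \<in> WD" and a: "a \<in> R" and l: "len D (w \<circ> rrefl a) = len D w + 1"
  shows "bruhat_cover R D w (w \<circ> rrefl a)"
proof -
  have "w \<circ> rrefl a \<in> WD" using gen_group_comp[OF w refl_WD[OF a]] .
  then show ?thesis using w a l unfolding bruhat_cover_def W_eq by blast
qed

lemma cover_left:
  assumes w: "w \<in> WD" and g: "g \<in> D" and l: "len D (rrefl g \<circ> w) = len D w + 1"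
  shows "bruhat_cover R D w (rrefl g \<circ> w)"
proof -
  let ?b = "inv w g"
  have gR: "g \<in> R" using g DR by auto
  have bR: "?b \<in> R" using WD_R[OF gen_inv(1)[OF w] gR] .
  have "w \<circ> rrefl ?b = rrefl (w ?b) \<circ> w" using isom_conj_comp[OF isom_gen[OF w]] .
  also have "w ?b = g" using gen_app_inv[OF w] .
  finally have e: "w \<circ> rrefl ?b = rrefl g \<circ> w" .
  show ?thesis using cover_right[OF w bR] l unfolding e[symmetric] by simp
qed

lemma le_proj_aux:
  assumes P: "P \<subseteq> D" and p: "p \<in> min_coset_reps R D P"
  shows "\<forall>x. x \<in> gen_group P \<longrightarrow> len D x = n \<longrightarrow> bruhat_le R D p (p \<circ> x)"
proof (induction n)
  case 0
  show ?case
  proof (intro allI impI)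
    fix x assume "x \<in> gen_group P" "len D x = 0"
    then have "x = id" using len_zero_id gen_J_WD[OF P] by blast
    then show "bruhat_le R D p (p \<circ> x)" by (simp add: bruhat_le_def)
  qed
next
  case (Suc n)
  show ?case
  proof (intro allI impI)
    fix x assume x: "x \<in> gen_group P" and lx: "len D x = Suc n"
    have xW: "x \<in> WD" using x gen_J_WD[OF P] by blast
    have "x \<noteq> id" using lx len_id by auto
    then obtain a where a: "a \<in> P" "x a \<notin> Pos" using J_ident[OF P x] by blast
    have aD: "a \<in> D" using a P by auto
    let ?x' = "x \<circ> rrefl a"
    have x': "?x' \<in> gen_group P" using gen_group_comp[OF x gen_group_refl[OF a(1)]] .
    have lx': "len D ?x' + 1 = len D x" using len_right_neg[OF xW aD a(2)] .
    have IH: "bruhat_le R D p (p \<circ> ?x')" using Suc.IH x' lx' lx by (simp add: o_def)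
    have pW: "p \<circ> ?x' \<in> WD" using minrep_WD[OF P p] x' gen_J_WD[OF P] gen_group_comp by blast
    have ex: "(p \<circ> ?x') \<circ> rrefl a = p \<circ> x" by (rule ext) simp
    have "len D (p \<circ> x) = len D (p \<circ> ?x') + 1"
      using minrep_len_add[OF P p x] minrep_len_add[OF P p x'] lx' by simp
    then have "bruhat_cover R D (p \<circ> ?x') (p \<circ> x)"
      using cover_right[OF pW, of a] aD DR ex by auto
    then show "bruhat_le R D p (p \<circ> x)" using IH unfolding bruhat_le_def by auto
  qed
qed

lemma le_proj:
  "P \<subseteq> D \<Longrightarrow> p \<in> min_coset_reps R D P \<Longrightarrow> x \<in> gen_group P \<Longrightarrow> bruhat_le R D p (p \<circ> x)"
  using le_proj_aux by blast

lemma Pcover_top: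
  assumes P: "P \<subseteq> D" and y: "y \<in> min_coset_reps R D P" and c: "bruhat_cover R D u y"
  shows "P_cover R D P u y"
proof -
  have uW: "u \<in> WD" using cover_WD[OF c] by blast
  obtain x where x: "x \<in> gen_group P" "u = projP R D P u \<circ> x" using projP_props(2)[OF P uW] by blast
  have "bruhat_le R D (projP R D P u) u" using le_proj[OF P projP_props(1)[OF P uW] x(1)] x(2) by simp
  then have le: "bruhat_le R D (projP R D P u) y" using c unfolding bruhat_le_def by auto
  have "len D (projP R D P u) < len D y" using projP_len[OF P uW] cover_len[OF c] by simp
  then have "projP R D P u \<noteq> y" by auto
  then show ?thesis using c le projP_self[OF P y] by (simp add: P_cover_def bruhat_lt_def)
qed

lemma Pcover_left:
  assumes P: "P \<subseteq> D" and v: "v \<in> min_coset_reps R D P" and g: "g \<in> D"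
    and v': "rrefl g \<circ> v \<in> min_coset_reps R D P" and l: "len D (rrefl g \<circ> v) = len D v + 1"
    and x: "x \<in> gen_group P"
  shows "P_cover R D P (v \<circ> x) (rrefl g \<circ> v \<circ> x)"
proof -
  have vW: "v \<in> WD" using minrep_WD[OF P v] .
  have vxW: "v \<circ> x \<in> WD" using gen_group_comp[OF vW] x gen_J_WD[OF P] by blast
  have "len D (rrefl g \<circ> v \<circ> x) = len D (rrefl g \<circ> v) + len D x" using minrep_len_add[OF P v' x] .
  also have "\<dots> = len D (v \<circ> x) + 1" using l minrep_len_add[OF P v x] by simp
  finally have "len D (rrefl g \<circ> (v \<circ> x)) = len D (v \<circ> x) + 1" by (simp add: comp_assoc)
  then have c: "bruhat_cover R D (v \<circ> x) (rrefl g \<circ> v \<circ> x)"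
    using cover_left[OF vxW g] by (simp add: comp_assoc)
  have c2: "bruhat_cover R D v (rrefl g \<circ> v)" using cover_left[OF vW g l] .
  have "bruhat_lt R D v (rrefl g \<circ> v)"
    using c2 l unfolding bruhat_lt_def bruhat_le_def by auto
  then show ?thesis using c projP_minrep[OF P v x] projP_minrep[OF P v' x]
    by (simp add: P_cover_def)
qed

lemma step_up:
  assumes P: "P \<subseteq> D" and v: "v \<in> min_coset_reps R D P" and g: "g \<in> D"
    and h: "inv v g \<in> Pos" "inv v g \<notin> PhiJ P"
  shows "rrefl g \<circ> v \<in> min_coset_reps R D P" "len D (rrefl g \<circ> v) = len D v + 1"
proof -
  have vW: "v \<in> WD" using minrep_WD[OF P v] .
  show "len D (rrefl g \<circ> v) = len D v + 1" using len_left_pos[OF vW g h(1)] .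
  have "\<forall>a\<in>P. (rrefl g \<circ> v) a \<in> Pos"
  proof
    fix a assume a: "a \<in> P"
    have va: "v a \<in> Pos" using minrep_pos[OF P v a] .
    have "v a \<noteq> g"
    proof
      assume "v a = g"
      then have "inv v g = a" using gen_inv_app[OF vW] by metis
      then show False using h(2) J_simple_in[OF P a] by simp
    qed
    then show "(rrefl g \<circ> v) a \<in> Pos" using simple_perm[OF g va] by simp
  qed
  moreover have "rrefl g \<circ> v \<in> WD" using gen_group_comp[OF gen_group_refl[OF g] vW] .
  ultimately show "rrefl g \<circ> v \<in> min_coset_reps R D P" using minrep_iff[OF P] by blast
qed

lemma step_down:
  assumes P: "P \<subseteq> D" and v: "v \<in> min_coset_reps R D P" and ne: "v \<noteq> id"
  shows "\<exists>g\<in>D. rrefl g \<circ> v \<in> min_coset_reps R D P \<and> len D (rrefl g \<circ> v) + 1 = len D v"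
proof -
  have vW: "v \<in> WD" using minrep_WD[OF P v] .
  have "inv v \<noteq> id"
  proof
    assume "inv v = id"
    then have "v = id" using gen_inv(3)[OF vW] by simp
    then show False using ne by simp
  qed
  then obtain g where g: "g \<in> D" "inv v g \<notin> Pos" using WD_ident[OF gen_inv(1)[OF vW]] by blast
  have l: "len D (rrefl g \<circ> v) + 1 = len D v" using len_left_neg[OF vW g] .
  have "\<forall>a\<in>P. (rrefl g \<circ> v) a \<in> Pos"
  proof
    fix a assume a: "a \<in> P"
    have va: "v a \<in> Pos" using minrep_pos[OF P v a] .
    have "v a \<noteq> g"
    proof
      assume "v a = g"
      then have "inv v g = a" using gen_inv_app[OF vW] by metis
      then show False using g(2) D_Pos a P by auto
    qed
    then show "(rrefl g \<circ> v) a \<in> Pos" using simple_perm[OF g(1) va] by simp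
  qed
  moreover have "rrefl g \<circ> v \<in> WD" using gen_group_comp[OF gen_group_refl[OF g(1)] vW] .
  ultimately show ?thesis using minrep_iff[OF P] g l by blast
qed

lemma Ple_id_minrep_aux:
  assumes P: "P \<subseteq> D"
  shows "\<forall>v. v \<in> min_coset_reps R D P \<longrightarrow> len D v = n \<longrightarrow> P_le R D P id v"
proof (induction n)
  case 0
  show ?case
  proof (intro allI impI)
    fix v assume "v \<in> min_coset_reps R D P" "len D v = 0"
    then have "v = id" using len_zero_id minrep_WD[OF P] by blast
    then show "P_le R D P id v" by (simp add: P_le_def)
  qed
next
  case (Suc n)
  show ?case
  proof (intro allI impI)
    fix v assume v: "v \<in> min_coset_reps R D P" and l: "len D v = Suc n"
    have "v \<noteq> id" using l len_id by auto
    then obtain g where g: "g \<in> D" "rrefl g \<circ> v \<in> min_coset_reps R D P"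
      "len D (rrefl g \<circ> v) + 1 = len D v" using step_down[OF P v] by blast
    let ?v' = "rrefl g \<circ> v"
    have IH: "P_le R D P id ?v'" using Suc.IH g l by (simp add: o_def id_def)
    have v'W: "?v' \<in> WD" using minrep_WD[OF P g(2)] .
    have e: "rrefl g \<circ> ?v' = v" by (rule ext) simp
    have "bruhat_cover R D ?v' v" using cover_left[OF v'W g(1)] g(3) e by simp
    then have "P_cover R D P ?v' v" using Pcover_top[OF P v] by blast
    then show "P_le R D P id v" using IH unfolding P_le_def by auto
  qed
qed

lemma Ple_id_minrep: "P \<subseteq> D \<Longrightarrow> v \<in> min_coset_reps R D P \<Longrightarrow> P_le R D P id v"
  using Ple_id_minrep_aux by blast

lemma Ple_len:
  assumes P: "P \<subseteq> D" and le: "P_le R D P u v" and u: "u \<in> WD"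
  shows "v \<in> WD \<and> len D v + len D (projP R D P u) \<le> len D (projP R D P v) + len D u"
  using le unfolding P_le_def
proof (induction rule: rtranclp_induct)
  case base then show ?case using u by simp
next
  case (step y z)
  have c: "bruhat_cover R D y z" and lt: "bruhat_lt R D (projP R D P y) (projP R D P z)"
    using step(2) by (auto simp: P_cover_def)
  have "len D (projP R D P y) < len D (projP R D P z)" using bruhat_lt_len[OF lt] .
  then show ?case using step(3) cover_len[OF c] cover_WD[OF c] by simp
qed

end


context RS
begin

lemma step_ascent:
  assumes P: "P \<subseteq> D" and v: "v \<in> min_coset_reps R D P"
    and ne: "v \<noteq> ww0 \<circ> longest D (gen_group P)"
  shows "\<exists>g\<in>D. rrefl g \<circ> v \<in> min_coset_reps R D P \<and> len D (rrefl g \<circ> v) = len D v + 1"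
proof (rule ccontr)
  assume H: "\<not> ?thesis"
  let ?wP = "longest D (gen_group P)"
  have wPG: "?wP \<in> gen_group P" and wPn: "\<forall>a\<in>P. ?wP a \<notin> Pos" using longest_J[OF P] by auto
  have wPW: "?wP \<in> WD" using wPG gen_J_WD[OF P] by blast
  have vW: "v \<in> WD" using minrep_WD[OF P v] .
  have gv: "good v" using good_WD[OF vW] .
  have vpos: "\<forall>a\<in>P. v a \<in> Pos" using minrep_iff[OF P] v by blast
  let ?z = "?wP \<circ> inv v"
  have zW: "?z \<in> WD" using gen_group_comp[OF wPW gen_inv(1)[OF vW]] .
  have "\<forall>g\<in>D. ?z g \<notin> Pos"
  proof
    fix g assume g: "g \<in> D"
    have gR: "g \<in> R" using g DR by auto
    have igR: "inv v g \<in> R" using WD_R[OF gen_inv(1)[OF vW] gR] .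
    show "?z g \<notin> Pos"
    proof (cases "inv v g \<in> Pos")
      case True
      have l: "len D (rrefl g \<circ> v) = len D v + 1" using len_left_pos[OF vW g True] .
      then have "rrefl g \<circ> v \<notin> min_coset_reps R D P" using H g by blast
      moreover have "rrefl g \<circ> v \<in> WD" using gen_group_comp[OF gen_group_refl[OF g] vW] .
      ultimately obtain a where a: "a \<in> P" "(rrefl g \<circ> v) a \<notin> Pos" using minrep_iff[OF P] by blast
      have "v a = g" using simple_pos_to_neg[OF g vpos[rule_format, OF a(1)]] a(2) by simp
      then have "inv v g = inv v (v a)" by simp
      also have "\<dots> = a" by (rule gen_inv_app[OF vW])
      finally show ?thesis using wPn a(1) by simp
    next
      case False
      have b: "- inv v g \<in> Pos" using neg_iff igR False by blast
      have "- inv v g \<notin> PhiJ P"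
      proof
        assume "- inv v g \<in> PhiJ P"
        then have "v (- inv v g) \<in> Pos" using sign_pos[OF gv P vpos b] by blast
        moreover have "v (- inv v g) = - g" using good_neg[OF gv] gen_app_inv[OF vW] by simp
        ultimately have "- g \<in> Pos" by simp
        then show False using not_Pos_and_neg[OF D_Pos[OF g]] by simp
      qed
      then have "?wP (- inv v g) \<in> Pos" by (rule J_out(1)[OF P wPG b])
      then have "- ?wP (inv v g) \<in> Pos" using good_neg[OF good_WD[OF wPW]] by simp
      show ?thesis
      proof
        assume "?z g \<in> Pos"
        then have "?wP (inv v g) \<in> Pos" by simp
        then show False using not_Pos_and_neg \<open>- ?wP (inv v g) \<in> Pos\<close> by blast
      qed
    qed
  qed
  then have w0z: "ww0 = ?z" using longest_J_unique[OF order_refl zW] by blast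
  have i1: "?wP (?wP y) = y" for y using fun_cong[OF longest_invol[OF P], of y] by simp
  have i2: "ww0 (ww0 y) = y" for y using fun_cong[OF w0_invol, of y] by simp
  have i3: "inv v y = ?wP (ww0 y)" for y
  proof -
    have "ww0 y = ?wP (inv v y)" using fun_cong[OF w0z, of y] by simp
    then have "?wP (ww0 y) = ?wP (?wP (inv v y))" by (rule arg_cong)
    then show ?thesis using i1[of "inv v y"] by simp
  qed
  have "v = ww0 \<circ> ?wP"
  proof (rule ext)
    fix x
    have "inv v (ww0 (?wP x)) = x" using i3[of "ww0 (?wP x)"] i2[of "?wP x"] i1[of x] by simp
    then have "v x = v (inv v (ww0 (?wP x)))" by simp
    also have "\<dots> = ww0 (?wP x)" by (rule gen_app_inv[OF vW])
    finally show "v x = (ww0 \<circ> ?wP) x" by simp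
  qed
  then show False using ne by simp
qed

lemma Ple_top_aux:
  assumes P: "P \<subseteq> D"
  shows "\<forall>v. v \<in> min_coset_reps R D P \<longrightarrow> card Pos - len D v = n \<longrightarrow> P_le R D P v (ww0 \<circ> longest D (gen_group P))"
proof (induction n rule: less_induct)
  case (less n)
  show ?case
  proof (intro allI impI)
    fix v assume v: "v \<in> min_coset_reps R D P" and n: "card Pos - len D v = n"
    show "P_le R D P v (ww0 \<circ> longest D (gen_group P))"
    proof (cases "v = ww0 \<circ> longest D (gen_group P)")
      case True then show ?thesis by (simp add: P_le_def)
    next
      case False
      then obtain g where g: "g \<in> D" "rrefl g \<circ> v \<in> min_coset_reps R D P"
        "len D (rrefl g \<circ> v) = len D v + 1" using step_ascent[OF P v] by blast
      have "len D (rrefl g \<circ> v) \<le> card Pos" using len_le_N minrep_WD[OF P g(2)] by blast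
      then have lt: "card Pos - len D (rrefl g \<circ> v) < n" using g(3) n by simp
      have IH: "P_le R D P (rrefl g \<circ> v) (ww0 \<circ> longest D (gen_group P))"
        using less.IH[OF lt] g(2) by blast
      have vW: "rrefl g \<circ> v \<in> WD" using minrep_WD[OF P g(2)] .
      have "bruhat_cover R D v (rrefl g \<circ> v)" using cover_left[OF minrep_WD[OF P v] g(1) g(3)] .
      then have "P_cover R D P v (rrefl g \<circ> v)" using Pcover_top[OF P g(2)] by blast
      then show ?thesis using IH unfolding P_le_def by (rule converse_rtranclp_into_rtranclp)
    qed
  qed
qed

lemma Ple_top: "P \<subseteq> D \<Longrightarrow> v \<in> min_coset_reps R D P \<Longrightarrow> P_le R D P v (ww0 \<circ> longest D (gen_group P))"
  using Ple_top_aux by blast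

end


context RS
begin

fun lay :: "'a set \<Rightarrow> nat \<Rightarrow> 'a set" where
  "lay P 0 = {}"
| "lay P (Suc n) = (D - P) \<union> lay P n \<union> {d \<in> D. \<exists>c\<in>lay P n. d \<bullet> c \<noteq> 0}"

lemma lay_D: "lay P n \<subseteq> D"
  by (induction n) auto

lemma step_root:
  assumes P: "P \<subseteq> D" and v: "v \<in> WD" and d: "d \<in> P" and c: "c \<in> D" and dc: "d \<bullet> c \<noteq> 0"
    and fx: "inv v d = d" and h: "inv v c \<in> Pos" "inv v c \<notin> PhiJ P"
  shows "inv v (rrefl c d) \<in> Pos" "inv v (rrefl c d) \<notin> PhiJ P"
proof -
  let ?r = "inv v c"
  have dD: "d \<in> D" using d P by auto
  have iv: "inv v \<in> WD" using gen_inv(1)[OF v] .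
  have lin: "linear (inv v)" using linear_gen[OF iv] .
  have "d \<noteq> c"
  proof
    assume "d = c"
    then have "?r = d" using fx by simp
    then show False using h(2) J_simple_in[OF P d] by simp
  qed
  then have "d \<bullet> c \<le> 0" using simple_inner_nonpos[OF dD c] by simp
  then have dcn: "d \<bullet> c < 0" using dc by simp
  have "c \<bullet> c > 0" using D_nz[OF c] by simp
  define k where "k = 2 * (d \<bullet> c) / (c \<bullet> c)"
  have kn: "k < 0" using dcn \<open>c \<bullet> c > 0\<close> by (simp add: k_def divide_neg_pos)
  have e: "inv v (rrefl c d) = d - k *\<^sub>R ?r"
    by (simp add: rrefl_eq k_def linear_diff[OF lin] linear_scale[OF lin] fx)
  have rR: "?r \<in> R" using h(1) Pos_R by blast
  obtain a where a: "a \<in> D - P" "cf ?r a \<noteq> 0" using h(2) rR by (auto simp: PhiJ_def)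
  have "cf ?r a \<ge> 0" using h(1) a by (auto simp: Pos_def)
  then have ra: "cf ?r a > 0" using a(2) by simp
  have "cf d a = 0" using cf_simple[of a d] a dD d by auto
  then have gt: "cf (inv v (rrefl c d)) a > 0"
    using a ra kn by (simp add: e cf_diff cf_scale mult_neg_pos)
  have R: "inv v (rrefl c d) \<in> R" using WD_R[OF iv] reflR c dD DR by auto
  show "inv v (rrefl c d) \<in> Pos" using Pos_by_cf[OF R _ gt] a by auto
  show "inv v (rrefl c d) \<notin> PhiJ P"
  proof
    assume "inv v (rrefl c d) \<in> PhiJ P"
    then have "cf (inv v (rrefl c d)) a = 0" using a unfolding PhiJ_def by blast
    then show False using gt by simp
  qed
qed

lemma id_minrep: "P \<subseteq> D \<Longrightarrow> id \<in> min_coset_reps R D P"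
  using minrep_iff D_Pos by auto

lemma layQ:
  assumes P: "P \<subseteq> D"
  shows "\<forall>b \<in> lay P (Suc n) - lay P n. \<exists>v. v \<in> min_coset_reps R D P \<and> v \<in> gen_group (lay P n)
           \<and> inv v b \<in> Pos \<and> inv v b \<notin> PhiJ P \<and> (\<forall>x\<in>gen_group P. P_le R D P x (v \<circ> x))"
proof (induction n)
  case 0
  show ?case
  proof
    fix b assume "b \<in> lay P (Suc 0) - lay P 0"
    then have b: "b \<in> D" "b \<notin> P" by auto
    have "b \<notin> PhiJ P" using b by (auto simp: PhiJ_def cf_simple)
    moreover have "\<forall>x\<in>gen_group P. P_le R D P x (id \<circ> x)" by (simp add: P_le_def)
    ultimately show "\<exists>v. v \<in> min_coset_reps R D P \<and> v \<in> gen_group (lay P 0)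
           \<and> inv v b \<in> Pos \<and> inv v b \<notin> PhiJ P \<and> (\<forall>x\<in>gen_group P. P_le R D P x (v \<circ> x))"
      using id_minrep[OF P] D_Pos[OF b(1)] by (intro exI[of _ id]) (simp add: inv_id)
  qed
next
  case (Suc n)
  show ?case
  proof
    fix b assume bl: "b \<in> lay P (Suc (Suc n)) - lay P (Suc n)"
    have bD: "b \<in> D" using bl lay_D by blast
    have bP: "b \<in> P" using bl by auto
    obtain c where c: "c \<in> lay P (Suc n)" "b \<bullet> c \<noteq> 0" using bl by auto
    have cn: "c \<notin> lay P n" using c bl bD by auto
    have cD: "c \<in> D" using c lay_D by blast
    obtain v where v: "v \<in> min_coset_reps R D P" "v \<in> gen_group (lay P n)"
      "inv v c \<in> Pos" "inv v c \<notin> PhiJ P" "\<forall>x\<in>gen_group P. P_le R D P x (v \<circ> x)"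
      using Suc.IH c(1) cn by blast
    have vW: "v \<in> WD" using minrep_WD[OF P v(1)] .
    have orth: "b \<bullet> d = 0" if "d \<in> lay P n" for d using that bl bD by auto
    have fixb: "inv v b = b" using gen_fix[OF gen_inv(1)[OF v(2)] orth] by blast
    let ?v' = "rrefl c \<circ> v"
    have v': "?v' \<in> min_coset_reps R D P" "len D ?v' = len D v + 1"
      using step_up[OF P v(1) cD v(3,4)] by auto
    have "gen_group (lay P n) \<subseteq> gen_group (lay P (Suc n))" by (rule gen_group_mono) auto
    then have "v \<in> gen_group (lay P (Suc n))" using v(2) by blast
    then have "?v' \<in> gen_group (lay P (Suc n))"
      using gen_group_comp[OF gen_group_refl[OF c(1)]] by blast
    moreover have "inv ?v' b \<in> Pos \<and> inv ?v' b \<notin> PhiJ P"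
      using step_root[OF P vW bP cD c(2) fixb v(3,4)] inv_comp_rrefl[OF vW] by simp
    moreover have "\<forall>x\<in>gen_group P. P_le R D P x (?v' \<circ> x)"
    proof
      fix x assume x: "x \<in> gen_group P"
      have "P_cover R D P (v \<circ> x) (?v' \<circ> x)" using Pcover_left[OF P v(1) cD v' x] .
      then show "P_le R D P x (?v' \<circ> x)" using v(5) x unfolding P_le_def by auto
    qed
    ultimately show "\<exists>v. v \<in> min_coset_reps R D P \<and> v \<in> gen_group (lay P (Suc n))
           \<and> inv v b \<in> Pos \<and> inv v b \<notin> PhiJ P \<and> (\<forall>x\<in>gen_group P. P_le R D P x (v \<circ> x))"
      using v'(1) by blast
  qed
qed

lemma span_orth:
  assumes "\<forall>a\<in>A. \<forall>b\<in>B. a \<bullet> b = 0" "x \<in> span A" "y \<in> span B"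
  shows "x \<bullet> y = 0"
proof -
  have "\<forall>b\<in>B. x \<bullet> b = 0"
  proof
    fix b assume b: "b \<in> B"
    have "span A \<subseteq> {x. x \<bullet> b = 0}"
      by (rule span_minimal) (use assms(1) b in \<open>auto intro: subspace_hyperplane2\<close>)
    then show "x \<bullet> b = 0" using assms(2) by auto
  qed
  then have "span B \<subseteq> {y. x \<bullet> y = 0}"
    by (intro span_minimal) (auto intro: subspace_hyperplane)
  then show ?thesis using assms(3) by auto
qed

lemma span_pres:
  assumes D1: "D1 \<subseteq> D" and orth: "\<forall>a\<in>D1. \<forall>b\<in>D - D1. a \<bullet> b = 0"
    and w: "w \<in> WD" and x: "x \<in> span D1"
  shows "w x \<in> span D1"
proof -
  obtain ws where ws: "set ws \<subseteq> D" "w = word ws" using w by (rule gen_groupE)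
  have "word ws x \<in> span D1" using ws(1)
  proof (induction ws)
    case Nil then show ?case using x by simp
  next
    case (Cons c ws)
    then have c: "c \<in> D" and IH: "word ws x \<in> span D1" by auto
    show ?case
    proof (cases "c \<in> D1")
      case True
      then show ?thesis using IH by (simp add: rrefl_eq span_diff span_scale span_base)
    next
      case False
      have "word ws x \<bullet> c = 0"
        using span_orth[of D1 "{c}", OF _ IH span_base] orth False c by auto
      then show ?thesis using IH by (simp add: rrefl_orth)
    qed
  qed
  then show ?thesis using ws by simp
qed

lemma split_reducible:
  assumes D1: "D1 \<subseteq> D" "D1 \<noteq> {}" "D - D1 \<noteq> {}" and orth: "\<forall>a\<in>D1. \<forall>b\<in>D - D1. a \<bullet> b = 0"
  shows "\<not> irreducible_rs R"
proof -
  have orth2: "\<forall>a\<in>D - D1. \<forall>b\<in>D - (D - D1). a \<bullet> b = 0"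
    using orth D1(1) by (metis Diff_iff inner_commute)
  let ?R1 = "R \<inter> span D1" and ?R2 = "R \<inter> span (D - D1)"
  have "R \<subseteq> ?R1 \<union> ?R2"
  proof
    fix b assume b: "b \<in> R"
    obtain w a where wa: "w \<in> WD" "a \<in> D" "b = w a \<or> b = - w a" using root_conj_simple[OF b] by blast
    show "b \<in> ?R1 \<union> ?R2"
    proof (cases "a \<in> D1")
      case True
      have "w a \<in> span D1" using span_pres[OF D1(1) orth wa(1) span_base[OF True]] .
      then have "b \<in> span D1" using wa(3) span_neg by auto
      then show ?thesis using b by auto
    next
      case False
      have "w a \<in> span (D - D1)" using span_pres[OF _ orth2 wa(1) span_base[of a]] False wa(2) by auto
      then have "b \<in> span (D - D1)" using wa(3) span_neg by auto
      then show ?thesis using b by auto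
    qed
  qed
  then have U: "?R1 \<union> ?R2 = R" by auto
  have I: "?R1 \<inter> ?R2 = {}"
  proof (rule ccontr)
    assume "?R1 \<inter> ?R2 \<noteq> {}"
    then obtain x where x: "x \<in> R" "x \<in> span D1" "x \<in> span (D - D1)" by auto
    have "x \<bullet> x = 0" using span_orth[OF orth x(2,3)] .
    then show False using x(1) zeroR by auto
  qed
  have N1: "?R1 \<noteq> {}" using D1(1,2) DR span_base by blast
  have N2: "?R2 \<noteq> {}" using D1(3) DR span_base by blast
  have O: "\<forall>a\<in>?R1. \<forall>b\<in>?R2. a \<bullet> b = 0" using span_orth[OF orth] by blast
  have "\<exists>R1 R2. R1 \<noteq> {} \<and> R2 \<noteq> {} \<and> R1 \<union> R2 = R \<and> R1 \<inter> R2 = {} \<and> (\<forall>a\<in>R1. \<forall>b\<in>R2. a \<bullet> b = 0)"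
    by (rule exI[of _ ?R1], rule exI[of _ ?R2], intro conjI N1 N2 U I O)
  then show ?thesis unfolding irreducible_rs_def by blast
qed

lemma conn:
  assumes irr: "irreducible_rs R" and P: "P \<subseteq> D" "P \<noteq> D" and a: "a \<in> D"
  shows "\<exists>n. a \<in> lay P n"
proof (rule ccontr)
  assume H: "\<not> ?thesis"
  let ?U = "\<Union>n. lay P n"
  have UD: "?U \<subseteq> D" using lay_D by blast
  have "D - P \<subseteq> lay P (Suc 0)" by simp
  then have ne1: "?U \<noteq> {}" using P by blast
  have ne2: "D - ?U \<noteq> {}" using H a by blast
  have "\<forall>x\<in>?U. \<forall>y\<in>D - ?U. x \<bullet> y = 0"
  proof (intro ballI)
    fix x y assume x: "x \<in> ?U" and y: "y \<in> D - ?U"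
    obtain n where n: "x \<in> lay P n" using x by blast
    show "x \<bullet> y = 0"
    proof (rule ccontr)
      assume "x \<bullet> y \<noteq> 0"
      then have "y \<in> lay P (Suc n)" using n y by (auto simp: inner_commute)
      then show False using y by blast
    qed
  qed
  then show False using split_reducible[OF UD ne1 ne2] irr by blast
qed

end


context RS
begin

lemma len_refl: "a \<in> D \<Longrightarrow> len D (rrefl a) = 1"
  using len_right_pos[OF gen_group_id, of a] D_Pos len_id by simp

lemma len_one:
  assumes w: "w \<in> WD" and l: "len D w = 1"
  shows "\<exists>a\<in>D. w = rrefl a"
proof -
  obtain ws where ws: "set ws \<subseteq> D" "length ws = 1" "word ws = w" using len_ex[OF w] l by metis
  then obtain a where "ws = [a]" by (cases ws) auto
  then show ?thesis using ws by auto
qed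

lemma final_inP:
  assumes irr: "irreducible_rs R" and P: "P \<subseteq> D" "P \<noteq> D" and al: "al \<in> P"
  shows "P_le R D P (rrefl al) (ww0 \<circ> longest D (gen_group P))"
proof -
  have alD: "al \<in> D" using al P by auto
  obtain n0 where n0: "al \<in> lay P n0" using conn[OF irr P alD] by blast
  define m where "m = (LEAST n. al \<in> lay P n)"
  have m: "al \<in> lay P m" using n0 unfolding m_def by (rule LeastI)
  have mk: "\<And>k. k < m \<Longrightarrow> al \<notin> lay P k" unfolding m_def by (rule not_less_Least)
  have "m \<noteq> 0" using m by (cases m) auto
  moreover have "m \<noteq> 1" using m al by auto
  ultimately obtain n where mn: "m = Suc (Suc n)" by (metis One_nat_def not0_implies_Suc)
  have nl: "al \<notin> lay P (Suc n)" using mk[of "Suc n"] mn by simp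
  obtain c where c: "c \<in> lay P (Suc n)" "al \<bullet> c \<noteq> 0" using m mn nl by auto
  have cn: "c \<notin> lay P n" using c nl alD by auto
  have cD: "c \<in> D" using c lay_D by blast
  obtain v where v: "v \<in> min_coset_reps R D P" "v \<in> gen_group (lay P n)"
      "inv v c \<in> Pos" "inv v c \<notin> PhiJ P" "\<forall>x\<in>gen_group P. P_le R D P x (v \<circ> x)"
    using layQ[OF P(1), of n] c(1) cn by blast
  have vW: "v \<in> WD" using minrep_WD[OF P(1) v(1)] .
  have orth: "al \<bullet> d = 0" if "d \<in> lay P n" for d using that nl alD by auto
  have fixi: "inv v al = al" using gen_fix[OF gen_inv(1)[OF v(2)] orth] by blast
  have fixv: "v al = al" using gen_fix[OF v(2) orth] by blast
  let ?v1 = "rrefl c \<circ> v"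
  have v1: "?v1 \<in> min_coset_reps R D P" "len D ?v1 = len D v + 1"
    using step_up[OF P(1) v(1) cD v(3,4)] by auto
  have "inv ?v1 al \<in> Pos \<and> inv ?v1 al \<notin> PhiJ P"
    using step_root[OF P(1) vW al cD c(2) fixi v(3,4)] inv_comp_rrefl[OF vW] by simp
  then have v2: "rrefl al \<circ> ?v1 \<in> min_coset_reps R D P" "len D (rrefl al \<circ> ?v1) = len D ?v1 + 1"
    using step_up[OF P(1) v1(1) alD] by auto
  let ?v2 = "rrefl al \<circ> ?v1"
  let ?r = "inv v c"
  have rR: "?r \<in> R" using v(3) Pos_R by blast
  have e1: "v \<circ> rrefl al = rrefl al \<circ> v"
    using isom_conj_comp[OF isom_gen[OF vW], of al] fixv by simp
  have e2: "v \<circ> rrefl ?r = rrefl c \<circ> v"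
    using isom_conj_comp[OF isom_gen[OF vW], of ?r] gen_app_inv[OF vW] by simp
  have e3: "(v \<circ> rrefl al) \<circ> rrefl ?r = ?v2"
  proof -
    have "(v \<circ> rrefl al) \<circ> rrefl ?r = (rrefl al \<circ> v) \<circ> rrefl ?r" by (simp only: e1)
    also have "\<dots> = rrefl al \<circ> (v \<circ> rrefl ?r)" by (simp only: comp_assoc)
    also have "\<dots> = ?v2" by (simp only: e2)
    finally show ?thesis .
  qed
  have vaW: "v \<circ> rrefl al \<in> WD" using WD_comp_rrefl[OF vW alD] .
  have lva: "len D (v \<circ> rrefl al) = len D v + 1"
    using len_right_pos[OF vW alD] fixv D_Pos[OF alD] by simp
  have "len D ((v \<circ> rrefl al) \<circ> rrefl ?r) = len D (v \<circ> rrefl al) + 1"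
    unfolding e3 using v1(2) v2(2) lva by simp
  then have "bruhat_cover R D (v \<circ> rrefl al) ((v \<circ> rrefl al) \<circ> rrefl ?r)"
    using cover_right[OF vaW rR] by blast
  then have cov: "P_cover R D P (v \<circ> rrefl al) ?v2"
    using Pcover_top[OF P(1) v2(1)] unfolding e3 by blast
  have le1: "P_le R D P (rrefl al) (v \<circ> rrefl al)" using v(5) gen_group_refl[OF al] by blast
  have le2: "P_le R D P ?v2 (ww0 \<circ> longest D (gen_group P))" using Ple_top[OF P(1) v2(1)] .
  show ?thesis using le1 cov le2 unfolding P_le_def
    by (meson rtranclp.rtrancl_into_rtrancl rtranclp_trans)
qed

lemma main:
  assumes irr: "irreducible_rs R" and P: "P \<subseteq> D" "P \<noteq> D" and u: "u \<in> WD"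
  defines "wP \<equiv> longest D (gen_group P)"
  shows "((bruhat_cover R D id u \<and> P_le R D P u (ww0 \<circ> wP)) \<longleftrightarrow> (\<exists>\<alpha>\<in>D. u = rrefl \<alpha>))
         \<and> ((P_le R D P id u \<and> bruhat_cover R D u (ww0 \<circ> wP))
           \<longleftrightarrow> (\<exists>\<alpha>\<in>D - P. u = projP R D P (ww0 \<circ> rrefl \<alpha>) \<and> u = ww0 \<circ> rrefl \<alpha> \<circ> wP))"
proof -
  have wPG: "wP \<in> gen_group P" and wPn: "\<forall>a\<in>P. wP a \<notin> Pos"
    using longest_J[OF P(1)] by (auto simp: wP_def)
  have wPW: "wP \<in> WD" using wPG gen_J_WD[OF P(1)] by blast
  have iP: "wP (wP x) = x" for x using fun_cong[OF longest_invol[OF P(1)], of x] by (simp add: wP_def)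
  have i0: "ww0 (ww0 x) = x" for x using fun_cong[OF w0_invol, of x] by simp
  have topW: "ww0 \<circ> wP \<in> WD" using gen_group_comp[OF w0_WD wPW] .
  have topMR: "ww0 \<circ> wP \<in> min_coset_reps R D P"
  proof -
    have "\<forall>a\<in>P. (ww0 \<circ> wP) a \<in> Pos"
    proof
      fix a assume a: "a \<in> P"
      have "wP a \<in> R" using WD_R[OF wPW] a P DR by auto
      then show "(ww0 \<circ> wP) a \<in> Pos" using w0_pos wPn a by simp
    qed
    then show ?thesis using minrep_iff[OF P(1)] topW by blast
  qed
  have ltop: "len D (ww0 \<circ> wP) + len D wP = card Pos" using len_w0_comp[OF wPW] .
  have lw0: "len D ww0 = card Pos" using len_w0_comp[OF gen_group_id] len_id by simp
  have part1: "(bruhat_cover R D id u \<and> P_le R D P u (ww0 \<circ> wP)) \<longleftrightarrow> (\<exists>\<alpha>\<in>D. u = rrefl \<alpha>)"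
  proof
    assume h: "bruhat_cover R D id u \<and> P_le R D P u (ww0 \<circ> wP)"
    then have "len D u = 1" using cover_len len_id by fastforce
    then show "\<exists>\<alpha>\<in>D. u = rrefl \<alpha>" using len_one[OF u] by blast
  next
    assume "\<exists>\<alpha>\<in>D. u = rrefl \<alpha>"
    then obtain al where al: "al \<in> D" "u = rrefl al" by blast
    have alR: "al \<in> R" using al DR by auto
    have "len D (id \<circ> rrefl al) = len D id + 1" using len_refl[OF al(1)] len_id by simp
    then have c: "bruhat_cover R D id u" using cover_right[OF gen_group_id alR] al by simp
    have "P_le R D P u (ww0 \<circ> wP)"
    proof (cases "al \<in> P")
      case True
      then show ?thesis using final_inP[OF irr P True] al by (simp add: wP_def)
    next
      case False
      have "\<forall>a\<in>P. rrefl al a \<in> Pos"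
      proof
        fix a assume a: "a \<in> P"
        then have "a \<noteq> al" using False by auto
        then show "rrefl al a \<in> Pos" using simple_perm[OF al(1) D_Pos] a P by auto
      qed
      then have "rrefl al \<in> min_coset_reps R D P"
        using minrep_iff[OF P(1)] gen_group_refl[OF al(1)] by blast
      then show ?thesis using Ple_top[OF P(1)] al by (simp add: wP_def)
    qed
    then show "bruhat_cover R D id u \<and> P_le R D P u (ww0 \<circ> wP)" using c by blast
  qed
  have part2: "(P_le R D P id u \<and> bruhat_cover R D u (ww0 \<circ> wP))
           \<longleftrightarrow> (\<exists>\<alpha>\<in>D - P. u = projP R D P (ww0 \<circ> rrefl \<alpha>) \<and> u = ww0 \<circ> rrefl \<alpha> \<circ> wP)"
  proof
    assume h: "P_le R D P id u \<and> bruhat_cover R D u (ww0 \<circ> wP)"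
    have "len D u + len D (projP R D P id) \<le> len D (projP R D P u) + len D id"
      using Ple_len[OF P(1) _ gen_group_id] h by blast
    then have "len D u \<le> len D (projP R D P u)"
      using projP_self[OF P(1) id_minrep[OF P(1)]] len_id by simp
    then have uMR: "u \<in> min_coset_reps R D P"
      using minrep_len_eq[OF P(1) u] projP_len[OF P(1) u] by simp
    let ?y = "u \<circ> wP"
    have ly: "len D ?y = len D u + len D wP" using minrep_len_add[OF P(1) uMR wPG] .
    have yW: "?y \<in> WD" using gen_group_comp[OF u wPW] .
    let ?z = "ww0 \<circ> ?y"
    have zW: "?z \<in> WD" using gen_group_comp[OF w0_WD yW] .
    have yz: "?y = ww0 \<circ> ?z" by (rule ext) (simp add: i0)
    have "len D (ww0 \<circ> ?z) + len D ?z = card Pos" using len_w0_comp[OF zW] .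
    then have lyz: "len D ?y + len D ?z = card Pos" using yz by simp
    have lc: "len D (ww0 \<circ> wP) = len D u + 1" using cover_len h by blast
    have "len D ?z = 1" using lyz ly ltop lc by simp
    then obtain al where al: "al \<in> D" "?z = rrefl al" using len_one[OF zW] by blast
    have ue: "u = ww0 \<circ> rrefl al \<circ> wP"
    proof (rule ext)
      fix x
      have "ww0 (rrefl al (wP x)) = ww0 (?z (wP x))" using al(2) by simp
      also have "\<dots> = u x" using i0 iP by simp
      finally show "u x = (ww0 \<circ> rrefl al \<circ> wP) x" by simp
    qed
    have alP: "al \<notin> P"
    proof
      assume alP: "al \<in> P"
      have g: "wP \<circ> rrefl al \<in> gen_group P" using gen_group_comp[OF wPG gen_group_refl[OF alP]] .
      have "u \<circ> (wP \<circ> rrefl al) = ww0"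
        by (rule ext) (simp add: ue iP)
      then have "len D ww0 = len D u + len D (wP \<circ> rrefl al)"
        using minrep_len_add[OF P(1) uMR g] by simp
      moreover have "len D (wP \<circ> rrefl al) + 1 = len D wP"
        using len_right_neg[OF wPW al(1)] wPn alP by blast
      ultimately show False using lw0 ltop lc by simp
    qed
    have "ww0 \<circ> rrefl al = u \<circ> wP" by (rule ext) (simp add: ue iP)
    then have pe: "u = projP R D P (ww0 \<circ> rrefl al)" using projP_minrep[OF P(1) uMR wPG] by simp
    have "al \<in> D - P" using al(1) alP by blast
    then show "\<exists>\<alpha>\<in>D - P. u = projP R D P (ww0 \<circ> rrefl \<alpha>) \<and> u = ww0 \<circ> rrefl \<alpha> \<circ> wP"
      using pe ue by blast
  next
    assume "\<exists>\<alpha>\<in>D - P. u = projP R D P (ww0 \<circ> rrefl \<alpha>) \<and> u = ww0 \<circ> rrefl \<alpha> \<circ> wP"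
    then obtain al where al: "al \<in> D" "al \<notin> P" "u = ww0 \<circ> rrefl al \<circ> wP" by blast
    have alR: "al \<in> R" using al DR by auto
    have alPhi: "al \<notin> PhiJ P" using al by (auto simp: PhiJ_def cf_simple)
    have "\<forall>a\<in>P. u a \<in> Pos"
    proof
      fix a assume a: "a \<in> P"
      have phi: "wP a \<in> PhiJ P" using J_PhiJ[OF P(1) wPG J_simple_in[OF P(1) a]] .
      then have R: "wP a \<in> R" by (simp add: PhiJ_def)
      have b: "- wP a \<in> Pos" using neg_iff R wPn a by blast
      have "- wP a \<noteq> al" using PhiJ_neg[OF phi] alPhi by auto
      then have "rrefl al (- wP a) \<in> Pos" using simple_perm[OF al(1) b] by simp
      then have "rrefl al (wP a) \<notin> Pos" using not_Pos_and_neg rrefl_minus by metis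
      moreover have "rrefl al (wP a) \<in> R" using reflR[OF alR R] .
      ultimately have "ww0 (rrefl al (wP a)) \<in> Pos" using w0_pos by blast
      then show "u a \<in> Pos" using al(3) by simp
    qed
    moreover have uW: "u \<in> WD" using u .
    ultimately have uMR: "u \<in> min_coset_reps R D P" using minrep_iff[OF P(1)] by blast
    have e: "u \<circ> wP = ww0 \<circ> rrefl al" by (rule ext) (simp add: al(3) iP)
    have "len D (u \<circ> wP) = len D u + len D wP" using minrep_len_add[OF P(1) uMR wPG] .
    moreover have "len D (ww0 \<circ> rrefl al) + len D (rrefl al) = card Pos"
      using len_w0_comp[OF gen_group_refl[OF al(1)]] .
    ultimately have lt: "len D (ww0 \<circ> wP) = len D u + 1"
      using e len_refl[OF al(1)] ltop by simp
    have wPaR: "wP al \<in> R" using WD_R[OF wPW alR] .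
    have e2: "u \<circ> rrefl (wP al) = ww0 \<circ> wP"
    proof (rule ext)
      fix x
      have "wP (rrefl (wP al) x) = rrefl (wP (wP al)) (wP x)"
        using isom_conj[OF isom_gen[OF wPW]] by blast
      then have "wP (rrefl (wP al) x) = rrefl al (wP x)" using iP by simp
      then show "(u \<circ> rrefl (wP al)) x = (ww0 \<circ> wP) x" using al(3) by simp
    qed
    have "bruhat_cover R D u (u \<circ> rrefl (wP al))" using cover_right[OF uW wPaR] lt e2 by simp
    then have c: "bruhat_cover R D u (ww0 \<circ> wP)" using e2 by simp
    have "P_le R D P id u" using Ple_id_minrep[OF P(1) uMR] .
    then show "P_le R D P id u \<and> bruhat_cover R D u (ww0 \<circ> wP)" using c by blast
  qed
  show ?thesis using part1 part2 by blast
qed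

end


theorem lemma3p8:
  fixes R \<Delta> \<Delta>P :: "'a::euclidean_space set" and u :: "'a \<Rightarrow> 'a"
  assumes "root_system R" and "irreducible_rs R" and "is_base R \<Delta>"
    and "\<Delta>P \<subseteq> \<Delta>" and "\<Delta>P \<noteq> \<Delta>" and "\<Delta>P \<noteq> {}"
    and "u \<in> weyl_group R"
  defines "w0 \<equiv> longest \<Delta> (weyl_group R)" and "wP \<equiv> longest \<Delta> (gen_group \<Delta>P)"
  shows "((bruhat_cover R \<Delta> id u \<and> P_le R \<Delta> \<Delta>P u (w0 \<circ> wP))
           \<longleftrightarrow> (\<exists>\<alpha>\<in>\<Delta>. u = rrefl \<alpha>))
         \<and> ((P_le R \<Delta> \<Delta>P id u \<and> bruhat_cover R \<Delta> u (w0 \<circ> wP))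
           \<longleftrightarrow> (\<exists>\<alpha>\<in>\<Delta> - \<Delta>P. u = projP R \<Delta> \<Delta>P (w0 \<circ> rrefl \<alpha>) \<and> u = w0 \<circ> rrefl \<alpha> \<circ> wP))"
proof -
  interpret RS R \<Delta> by (rule RS.intro) (rule assms(1), rule assms(3))
  have W: "weyl_group R = gen_group \<Delta>" by (rule W_eq)
  have uW: "u \<in> gen_group \<Delta>" using assms(7) W by simp
  have m: "((bruhat_cover R \<Delta> id u \<and> P_le R \<Delta> \<Delta>P u (longest \<Delta> (gen_group \<Delta>) \<circ> longest \<Delta> (gen_group \<Delta>P)))
           \<longleftrightarrow> (\<exists>\<alpha>\<in>\<Delta>. u = rrefl \<alpha>))
         \<and> ((P_le R \<Delta> \<Delta>P id u \<and> bruhat_cover R \<Delta> u (longest \<Delta> (gen_group \<Delta>) \<circ> longest \<Delta> (gen_group \<Delta>P)))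
           \<longleftrightarrow> (\<exists>\<alpha>\<in>\<Delta> - \<Delta>P. u = projP R \<Delta> \<Delta>P (longest \<Delta> (gen_group \<Delta>) \<circ> rrefl \<alpha>)
                \<and> u = longest \<Delta> (gen_group \<Delta>) \<circ> rrefl \<alpha> \<circ> longest \<Delta> (gen_group \<Delta>P)))"
    by (rule main[OF assms(2) assms(4) assms(5) uW])
  have w0e: "w0 = longest \<Delta> (gen_group \<Delta>)" unfolding w0_def W ..
  show ?thesis unfolding w0e wP_def by (rule m)
qed

end
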